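(* Fix $m\ge 1$ and two tree structure ensembles $\mathfrak{E},\mathfrak{E}'\in\Omega_{\mathrm{TSE},m}$, and let $\Delta\mathrm{BIC}(\mathfrak{E},\mathfrak{E}')=\mathrm{BIC}(\mathfrak{E})-\mathrm{BIC}(\mathfrak{E}')$. Then, as $n\to\infty$, $$\Delta\mathrm{BIC}(\mathfrak{E},\mathfrak{E}')=\frac{n}{\sigma^2}\Big(\mathrm{Bias}^2(\mathfrak{E};f^* )-\mathrm{Bias}^2(\mathfrak{E}';f^* )\Big)+O_{\mathbb P}\big(n^{1/2}\big).$$ If furthermore $\Pi_{\mathfrak{E}}[f^*]=\Pi_{\mathfrak{E}'}[f^*]$, then $$\Delta\mathrm{BIC}(\mathfrak{E},\mathfrak{E}')=\big(\mathrm{df}(\mathfrak{E})-\mathrm{df}(\mathfrak{E}')\big)\log n+O_{\mathbb P}(1).$$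
   Context: Data: Let $B,d\ge1$ be integers and $\mathcal X=\{1,\dots,B\}^d$. Let $f^*:\mathcal X\to\mathbb R$, let $\nu$ be a probability measure on $\mathcal X$ with full support, and let $\epsilon$ be a (centered) sub-Gaussian random variable. The training data consist of $n$ i.i.d. pairs $(\mathbf x_i,y_i)$ with $\mathbf x_i\sim\nu$ and $y_i=f^*(\mathbf x_i)+\epsilon_i$, $\epsilon_i$ i.i.d. copies of $\epsilon$ independent of the covariates; $\mathbf y=(y_1,\dots,y_n)^\top$. $\mathbb P_n$ denotes probability over the training data. Trees: A cell is a set $\{\mathbf x\in\mathcal X: l_i<x_i\le u_i,\ i=1,\dots,d\}$. A tree structure $\mathfrak T$ is a finite rooted binary tree whose internal nodes carry splitting rules $(v,t)$ (feature $v$, threshold $t$); the root corresponds to $\mathcal X$, and an internal node with cell $\mathfrak t$ and rule $(v,t)$ has children $\{\mathbf x\in\mathfrak t: x_v\le t\}$ and $\{\mathbf x\in\mathfrak t:x_v>t\}$ (both nonempty). The leaves partition $\mathcal X$. $\Omega_{\mathrm{TSE},m}$ is the (finite) set of tree structure ensembles (TSEs) $\mathfrak E=(\mathfrak T_1,\dots,\mathfrak T_m)$. $\mathcal F(\mathfrak E)\subset L^2(\nu)$ is the span of the indicator functions of all leaves of all trees of $\mathfrak E$; $\mathrm{df}(\mathfrak E)=\dim\mathcal F(\mathfrak E)$; $\Pi_{\mathfrak E}$ is the $L^2(\nu)$-orthogonal projection onto $\mathcal F(\mathfrak E)$; $\mathrm{Bias}^2(\mathfrak E;f)=\int(f-\Pi_{\mathfrak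 E}f)^2\,d\nu$. BIC: Let $\boldsymbol\Psi$ be the $n\times b$ matrix whose columns are the indicator vectors (over the training points) of all $b$ leaves of $\mathfrak E$, and $\mathbf P_{\mathfrak E}$ the orthogonal projection matrix onto its column space. For fixed $\sigma^2>0$, $\mathrm{BIC}(\mathfrak E)=\sigma^{-2}\mathbf y^\top(\mathbf I-\mathbf P_{\mathfrak E})\mathbf y+\mathrm{df}(\mathfrak E)\log n+n\log(2\pi\sigma^2)$. Notation: for sequences of random variables, $a_n=O_{\mathbb P}(b_n)$ means that for every $0<\delta<1$ there exist $N,C>0$ with $\sup_{n>N}\mathbb P_n\{|a_n/b_n|>C\}<\delta$; $C,N$ may depend on everything except $n$. *)

theory Defs
  imports "HOL-Probability.Probability" "HOL-Library.Function_Algebras"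
begin

text \<open>Points of X = {1..B}^d are functions nat => nat, coordinates indexed by 0..d-1
  (coordinate v corresponds to feature v+1 of the paper); extensional (undefined) outside.\<close>

definition grid :: "nat \<Rightarrow> nat \<Rightarrow> (nat \<Rightarrow> nat) set" where
  "grid B d = PiE {..<d} (\<lambda>_. {1..B})"

datatype tree = Leaf | Node nat nat tree tree   \<comment> \<open>Node v t left right: rule x_v <= t\<close>

fun tree_leaves :: "(nat \<Rightarrow> nat) set \<Rightarrow> tree \<Rightarrow> (nat \<Rightarrow> nat) set set" where
  "tree_leaves C Leaf = {C}"
| "tree_leaves C (Node v t l r) =
     tree_leaves {x \<in> C. x v \<le> t} l \<union> tree_leaves {x \<in> C. t < x v} r"

fun valid_tree :: "nat \<Rightarrow> (nat \<Rightarrow> nat) set \<Rightarrow> tree \<Rightarrow> bool" where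
  "valid_tree d C Leaf = True"
| "valid_tree d C (Node v t l r) =
     (v < d \<and> {x \<in> C. x v \<le> t} \<noteq> {} \<and> {x \<in> C. t < x v} \<noteq> {}
      \<and> valid_tree d {x \<in> C. x v \<le> t} l \<and> valid_tree d {x \<in> C. t < x v} r)"

definition TSE :: "nat \<Rightarrow> nat \<Rightarrow> nat \<Rightarrow> tree list set" where
  "TSE B d m = {E. length E = m \<and> (\<forall>T\<in>set E. valid_tree d (grid B d) T)}"

definition ens_leaves :: "nat \<Rightarrow> nat \<Rightarrow> tree list \<Rightarrow> (nat \<Rightarrow> nat) set set" where
  "ens_leaves B d E = (\<Union>T\<in>set E. tree_leaves (grid B d) T)"

definition fscale :: "real \<Rightarrow> ('a \<Rightarrow> real) \<Rightarrow> ('a \<Rightarrow> real)" where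
  "fscale c f = (\<lambda>x. c * f x)"

text \<open>Span of the leaf indicators (functions vanish outside X; since nu has full support,
  this is F(E) as a subspace of L2(nu)).\<close>
definition Fspace :: "nat \<Rightarrow> nat \<Rightarrow> tree list \<Rightarrow> ((nat \<Rightarrow> nat) \<Rightarrow> real) set" where
  "Fspace B d E = module.span fscale ((\<lambda>L. indicator L) ` ens_leaves B d E)"

definition df :: "nat \<Rightarrow> nat \<Rightarrow> tree list \<Rightarrow> nat" where
  "df B d E = vector_space.dim fscale (Fspace B d E)"

definition proj :: "(nat \<Rightarrow> nat) pmf \<Rightarrow> nat \<Rightarrow> nat \<Rightarrow> tree list
    \<Rightarrow> ((nat \<Rightarrow> nat) \<Rightarrow> real) \<Rightarrow> ((nat \<Rightarrow> nat) \<Rightarrow> real)" where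
  "proj \<nu> B d E f = (THE g. g \<in> Fspace B d E \<and>
      (\<forall>h\<in>Fspace B d E. measure_pmf.expectation \<nu> (\<lambda>x. (f x - g x) * h x) = 0))"

definition bias2 :: "(nat \<Rightarrow> nat) pmf \<Rightarrow> nat \<Rightarrow> nat \<Rightarrow> tree list \<Rightarrow> ((nat \<Rightarrow> nat) \<Rightarrow> real) \<Rightarrow> real" where
  "bias2 \<nu> B d E f = measure_pmf.expectation \<nu> (\<lambda>x. (f x - proj \<nu> B d E f x)^2)"

text \<open>Column space of Psi (n x b matrix of leaf indicators evaluated at the training points),
  as a subset of R^n represented by functions on {..<n}, and the orthogonal projection P.\<close>
definition colspace :: "nat \<Rightarrow> nat \<Rightarrow> tree list \<Rightarrow> nat \<Rightarrow> (nat \<Rightarrow> nat \<Rightarrow> nat)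
    \<Rightarrow> (nat \<Rightarrow> real) set" where
  "colspace B d E n xs = {v. \<exists>c. v = (\<lambda>i. if i < n then
       (\<Sum>L\<in>ens_leaves B d E. c L * indicator L (xs i)) else 0)}"

definition projmat :: "nat \<Rightarrow> nat \<Rightarrow> tree list \<Rightarrow> nat \<Rightarrow> (nat \<Rightarrow> nat \<Rightarrow> nat)
    \<Rightarrow> (nat \<Rightarrow> real) \<Rightarrow> (nat \<Rightarrow> real)" where
  "projmat B d E n xs y = (THE v. v \<in> colspace B d E n xs \<and>
      (\<forall>w\<in>colspace B d E n xs. (\<Sum>i<n. (y i - v i) * w i) = 0))"

definition BIC :: "real \<Rightarrow> nat \<Rightarrow> nat \<Rightarrow> tree list \<Rightarrow> nat \<Rightarrow> (nat \<Rightarrow> nat \<Rightarrow> nat)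
    \<Rightarrow> (nat \<Rightarrow> real) \<Rightarrow> real" where
  "BIC \<sigma>2 B d E n xs y =
     (\<Sum>i<n. y i * (y i - projmat B d E n xs y i)) / \<sigma>2
     + real (df B d E) * ln (real n) + real n * ln (2 * pi * \<sigma>2)"

definition subgaussian :: "real measure \<Rightarrow> bool" where
  "subgaussian M \<longleftrightarrow> (\<exists>K>0. \<forall>l::real. integrable M (\<lambda>e. exp (l * e)) \<and>
      (\<integral>e. exp (l * e) \<partial>M) \<le> exp (l^2 * K^2 / 2))"

definition centered :: "real measure \<Rightarrow> bool" where
  "centered M \<longleftrightarrow> integrable M (\<lambda>e. e) \<and> (\<integral>e. e \<partial>M) = 0"

definition data :: "(nat \<Rightarrow> nat) pmf \<Rightarrow> real measure \<Rightarrow> nat \<Rightarrow> (nat \<Rightarrow> (nat \<Rightarrow> nat) \<times> real) measure" where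
  "data \<nu> Noise n = PiM {..<n} (\<lambda>_. measure_pmf \<nu> \<Otimes>\<^sub>M Noise)"

definition covs :: "(nat \<Rightarrow> (nat \<Rightarrow> nat) \<times> real) \<Rightarrow> nat \<Rightarrow> nat \<Rightarrow> nat" where
  "covs \<omega> i = fst (\<omega> i)"

definition resp :: "((nat \<Rightarrow> nat) \<Rightarrow> real) \<Rightarrow> (nat \<Rightarrow> (nat \<Rightarrow> nat) \<times> real) \<Rightarrow> nat \<Rightarrow> real" where
  "resp f \<omega> i = f (fst (\<omega> i)) + snd (\<omega> i)"

text \<open>a_n = O_P(b_n) where a_n(omega) is a random variable on data n; stated with outer
  probability (smallest measurable cover), which coincides with P_n for measurable events.\<close>
definition bigO_P :: "(nat \<Rightarrow> 'a measure) \<Rightarrow> (nat \<Rightarrow> 'a \<Rightarrow> real) \<Rightarrow> (nat \<Rightarrow> real) \<Rightarrow> bool" where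
  "bigO_P P a b \<longleftrightarrow> (\<forall>\<delta>. 0 < \<delta> \<and> \<delta> < 1 \<longrightarrow> (\<exists>N C. N > 0 \<and> C > 0 \<and> (\<forall>n. real n > N \<longrightarrow>
      (\<exists>S\<in>sets (P n). {\<omega>\<in>space (P n). \<bar>a n \<omega> / b n\<bar> > C} \<subseteq> S \<and> measure (P n) S < \<delta>))))"


end

theory Submission
  imports Defs
begin

definition ip :: "'k set \<Rightarrow> ('k \<Rightarrow> real) \<Rightarrow> ('k \<Rightarrow> real) \<Rightarrow> ('k \<Rightarrow> real) \<Rightarrow> real" where
  "ip K w u v = (\<Sum>k\<in>K. w k * u k * v k)"

lemma ip_diff_left: "ip K w (\<lambda>k. u k - v k) z = ip K w u z - ip K w v z"
  unfolding ip_def by (simp add: algebra_simps sum_subtractf)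
lemma ip_scale_left: "ip K w (\<lambda>k. t * u k) z = t * ip K w u z"
  unfolding ip_def by (simp add: algebra_simps sum_distrib_left)
lemma ip_add_right: "ip K w u (\<lambda>k. v k + z k) = ip K w u v + ip K w u z"
  unfolding ip_def by (simp add: algebra_simps sum.distrib)
lemma ip_lc_right: "ip K w u (\<lambda>k. \<Sum>a\<in>A. q a * \<phi> a k) = (\<Sum>a\<in>A. q a * ip K w u (\<phi> a))"
  unfolding ip_def by (simp add: sum_distrib_left sum.swap[of _ K] algebra_simps)

lemma ip_zero_self:
  assumes "finite K" "\<forall>k\<in>K. 0 \<le> w k" "ip K w u u = 0"
  shows "ip K w u z = 0"
proof -
  have "\<forall>k\<in>K. w k * u k * u k = 0"
    using assms unfolding ip_def
    by (subst sum_nonneg_eq_0_iff[symmetric]) (auto intro: mult_nonneg_nonneg simp: mult.assoc)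
  then have "\<forall>k\<in>K. w k * u k = 0"
    using assms(2) by (metis mult_eq_0_iff mult.assoc mult_zero_left)
  then show ?thesis unfolding ip_def by (intro sum.neutral) auto
qed

lemma ip_sym: "ip K w u v = ip K w v u"
  unfolding ip_def by (simp add: algebra_simps)

lemma proj_ex_aux:
  assumes "finite K" "\<forall>k\<in>K. 0 \<le> w k" "finite A"
  shows "\<forall>y. \<exists>c. \<forall>b\<in>A. ip K w (\<lambda>k. y k - (\<Sum>a\<in>A. c a * \<phi> a k)) (\<phi> b) = 0"
  using assms(3)
proof (induction A rule: finite_induct)
  case empty
  then show ?case by simp
next
  case (insert a A)
  show ?case
  proof
    fix y :: "'a \<Rightarrow> real"
    obtain p where p: "\<forall>b\<in>A. ip K w (\<lambda>k. \<phi> a k - (\<Sum>a\<in>A. p a * \<phi> a k)) (\<phi> b) = 0"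
      using insert.IH by blast
    obtain c0 where c0: "\<forall>b\<in>A. ip K w (\<lambda>k. y k - (\<Sum>a\<in>A. c0 a * \<phi> a k)) (\<phi> b) = 0"
      using insert.IH by blast
    define a' where "a' = (\<lambda>k. \<phi> a k - (\<Sum>a\<in>A. p a * \<phi> a k))"
    define r0 where "r0 = (\<lambda>k. y k - (\<Sum>a\<in>A. c0 a * \<phi> a k))"
    have r0p: "ip K w r0 (\<lambda>k. \<Sum>a\<in>A. p a * \<phi> a k) = 0"
      using c0 unfolding r0_def ip_lc_right by simp
    have phia: "\<phi> a = (\<lambda>k. a' k + (\<Sum>a\<in>A. p a * \<phi> a k))" unfolding a'_def by auto
    show "\<exists>c. \<forall>b\<in>insert a A. ip K w (\<lambda>k. y k - (\<Sum>a\<in>insert a A. c a * \<phi> a k)) (\<phi> b) = 0"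
    proof (cases "ip K w a' a' = 0")
      case True
      have z: "ip K w u a' = 0" for u
        using ip_zero_self[OF assms(1,2) True] ip_sym by metis
      define c where "c = c0(a := 0)"
      have lc: "(\<Sum>b\<in>insert a A. c b * \<phi> b k) = (\<Sum>b\<in>A. c0 b * \<phi> b k)" for k
        using insert.hyps unfolding c_def by (auto intro!: sum.cong)
      have "ip K w r0 (\<phi> a) = 0"
        by (subst phia) (simp add: ip_add_right z r0p)
      then have "\<forall>b\<in>insert a A. ip K w (\<lambda>k. y k - (\<Sum>b\<in>insert a A. c b * \<phi> b k)) (\<phi> b) = 0"
        using c0 unfolding lc r0_def by auto
      then show ?thesis by blast
    next
      case False
      define t where "t = ip K w r0 a' / ip K w a' a'"
      define c where "c = (\<lambda>b. c0 b - t * p b)(a := t)"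
      have lc: "(\<Sum>b\<in>insert a A. c b * \<phi> b k) = (\<Sum>b\<in>A. c0 b * \<phi> b k) + t * a' k" for k
      proof -
        have "(\<Sum>b\<in>insert a A. c b * \<phi> b k) = t * \<phi> a k + (\<Sum>b\<in>A. (c0 b - t * p b) * \<phi> b k)"
          using insert.hyps unfolding c_def by (auto intro!: sum.cong)
        also have "\<dots> = (\<Sum>b\<in>A. c0 b * \<phi> b k) + t * a' k"
          unfolding a'_def by (simp add: algebra_simps sum_subtractf sum_distrib_left)
        finally show ?thesis .
      qed
      have res: "(\<lambda>k. y k - (\<Sum>b\<in>insert a A. c b * \<phi> b k)) = (\<lambda>k. r0 k - t * a' k)"
        unfolding lc r0_def by auto
      have ra: "ip K w (\<lambda>k. r0 k - t * a' k) a' = 0"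
        using False unfolding ip_diff_left ip_scale_left t_def by simp
      have rb: "ip K w (\<lambda>k. r0 k - t * a' k) (\<phi> b) = 0" if "b \<in> A" for b
        using that c0 p unfolding ip_diff_left ip_scale_left r0_def a'_def by simp
      have rp: "ip K w (\<lambda>k. r0 k - t * a' k) (\<lambda>k. \<Sum>a\<in>A. p a * \<phi> a k) = 0"
        unfolding ip_lc_right using rb by simp
      have "ip K w (\<lambda>k. r0 k - t * a' k) (\<phi> a) = ip K w (\<lambda>k. r0 k - t * a' k) a' + ip K w (\<lambda>k. r0 k - t * a' k) (\<lambda>k. \<Sum>a\<in>A. p a * \<phi> a k)"
        by (subst phia) (rule ip_add_right)
      then have "ip K w (\<lambda>k. r0 k - t * a' k) (\<phi> a) = 0" using ra rp by simp
      then have "\<forall>b\<in>insert a A. ip K w (\<lambda>k. y k - (\<Sum>b\<in>insert a A. c b * \<phi> b k)) (\<phi> b) = 0"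
        using rb unfolding res by auto
      then show ?thesis by blast
    qed
  qed
qed

lemma proj_ex:
  fixes w y :: "'k \<Rightarrow> real" and \<phi> :: "'a \<Rightarrow> 'k \<Rightarrow> real"
  assumes "finite K" "\<forall>k\<in>K. 0 \<le> w k" "finite A"
  shows "\<exists>c. \<forall>c'. (\<Sum>k\<in>K. w k * (y k - (\<Sum>a\<in>A. c a * \<phi> a k)) * (\<Sum>a\<in>A. c' a * \<phi> a k)) = 0"
proof -
  obtain c where c: "\<forall>b\<in>A. ip K w (\<lambda>k. y k - (\<Sum>a\<in>A. c a * \<phi> a k)) (\<phi> b) = 0"
    using proj_ex_aux[OF assms] by blast
  show ?thesis
  proof (intro exI[of _ c] allI)
    fix c'
    have "ip K w (\<lambda>k. y k - (\<Sum>a\<in>A. c a * \<phi> a k)) (\<lambda>k. \<Sum>a\<in>A. c' a * \<phi> a k) = 0"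
      using c by (simp add: ip_lc_right)
    then show "(\<Sum>k\<in>K. w k * (y k - (\<Sum>a\<in>A. c a * \<phi> a k)) * (\<Sum>a\<in>A. c' a * \<phi> a k)) = 0"
      unfolding ip_def .
  qed
qed

lemma sum_fun_apply': "(sum f A) x = (\<Sum>a\<in>A. f a x)" for f :: "'a \<Rightarrow> 'b \<Rightarrow> real"
  by (induction A rule: infinite_finite_induct) auto

lemma tree_leaves_props: "finite (tree_leaves C T) \<and> (\<forall>L\<in>tree_leaves C T. L \<subseteq> C)"
  by (induction T arbitrary: C) fastforce+

lemma grid_finite: "finite (grid B d)"
  unfolding grid_def by (intro finite_PiE) auto

lemma ens_leaves_finite: "finite (ens_leaves B d E)"
  unfolding ens_leaves_def using tree_leaves_props by auto

lemma ens_leaves_sub: "L \<in> ens_leaves B d E \<Longrightarrow> L \<subseteq> grid B d"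
  unfolding ens_leaves_def using tree_leaves_props by blast

definition lcf :: "'a set set \<Rightarrow> ('a set \<Rightarrow> real) \<Rightarrow> 'a \<Rightarrow> real" where
  "lcf Lv c = (\<lambda>x. \<Sum>L\<in>Lv. c L * indicator L x)"

lemma module_fscale: "module fscale"
  by unfold_locales (auto simp: fscale_def algebra_simps)

lemma indicator_inj: "inj_on (\<lambda>L. indicator L :: 'a \<Rightarrow> real) S"
proof (rule inj_onI)
  fix A B :: "'a set" assume "indicator A = (indicator B :: 'a \<Rightarrow> real)"
  then have "\<And>x. (indicator A x :: real) = indicator B x" by metis
  then have "\<And>x. (x \<in> A) = (x \<in> B)" by (metis indicator_def of_bool_eq_iff)
  then show "A = B" by blast
qed

lemma inv_ind: "L \<in> S \<Longrightarrow> inv_into S (\<lambda>L. indicator L :: 'a \<Rightarrow> real) (indicator L) = L"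
  by (rule inv_into_f_f[OF indicator_inj])

lemma Fspace_char: "Fspace B d E = range (lcf (ens_leaves B d E))"
proof -
  interpret module fscale by (rule module_fscale)
  let ?Lv = "ens_leaves B d E"
  have fin: "finite ((\<lambda>L. indicator L) ` ?Lv)" using ens_leaves_finite by auto
  have eq: "(\<Sum>v\<in>(\<lambda>L. indicator L) ` ?Lv. fscale (u v) v) = lcf ?Lv (\<lambda>L. u (indicator L))" for u
    by (rule ext) (simp add: sum_fun_apply' sum.reindex[OF indicator_inj] fscale_def lcf_def)
  show ?thesis
    unfolding Fspace_def span_finite[OF fin] eq
  proof safe
    fix c
    have "lcf ?Lv c = lcf ?Lv (\<lambda>L. (\<lambda>v::(nat \<Rightarrow> nat) \<Rightarrow> real. c (inv_into ?Lv indicator v)) (indicator L))"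
      unfolding lcf_def
    proof (intro ext sum.cong refl)
      fix x L assume "L \<in> ?Lv"
      then have "inv_into ?Lv indicator (indicator L :: (nat \<Rightarrow> nat) \<Rightarrow> real) = L" by (rule inv_ind)
      then show "c L * indicator L x = (\<lambda>v::(nat \<Rightarrow> nat) \<Rightarrow> real. c (inv_into ?Lv indicator v)) (indicator L) * indicator L x" by simp
    qed
    then show "lcf ?Lv c \<in> range (\<lambda>u. lcf ?Lv (\<lambda>L. u (indicator L :: (nat \<Rightarrow> nat) \<Rightarrow> real)))"
      by (intro image_eqI[where x="\<lambda>v::(nat \<Rightarrow> nat) \<Rightarrow> real. c (inv_into ?Lv indicator v)"]) auto
  qed auto
qed

lemma lcf_outside: "x \<notin> grid B d \<Longrightarrow> lcf (ens_leaves B d E) c x = 0"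
  unfolding lcf_def
proof (intro sum.neutral ballI)
  fix L assume "x \<notin> grid B d" "L \<in> ens_leaves B d E"
  then have "x \<notin> L" using ens_leaves_sub by blast
  then show "c L * indicator L x = 0" by simp
qed


lemma lcf_diff: "lcf Lv (\<lambda>L. c L - c' L) x = lcf Lv c x - lcf Lv c' x"
  unfolding lcf_def by (simp add: algebra_simps sum_subtractf)

lemma expect_grid:
  assumes "set_pmf \<nu> = grid B d"
  shows "measure_pmf.expectation \<nu> h = (\<Sum>x\<in>grid B d. pmf \<nu> x * h x)"
  using assms by (subst integral_measure_pmf[OF grid_finite]) auto

lemma proj_char:
  assumes "set_pmf \<nu> = grid B d"
  shows "\<exists>c. proj \<nu> B d E f = lcf (ens_leaves B d E) c \<and>
    (\<forall>c'. (\<Sum>x\<in>grid B d. pmf \<nu> x * (f x - proj \<nu> B d E f x) * lcf (ens_leaves B d E) c' x) = 0)"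
proof -
  let ?Lv = "ens_leaves B d E" and ?X = "grid B d"
  obtain c where c: "\<forall>c'. (\<Sum>k\<in>?X. pmf \<nu> k * (f k - (\<Sum>a\<in>?Lv. c a * indicator a k)) * (\<Sum>a\<in>?Lv. c' a * indicator a k)) = 0"
    using proj_ex[OF grid_finite[of B d] _ ens_leaves_finite[of B d E], where w="pmf \<nu>" and y=f and \<phi>="\<lambda>L. indicator L"] by auto
  let ?g = "lcf ?Lv c"
  have orth: "(\<Sum>x\<in>?X. pmf \<nu> x * (f x - ?g x) * lcf ?Lv c' x) = 0" for c'
    using c unfolding lcf_def by auto
  have P: "?g \<in> Fspace B d E \<and> (\<forall>h\<in>Fspace B d E. measure_pmf.expectation \<nu> (\<lambda>x. (f x - ?g x) * h x) = 0)"
    using orth by (auto simp: Fspace_char expect_grid[OF assms] mult.assoc)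
  have "proj \<nu> B d E f = ?g"
    unfolding proj_def
  proof (rule the_equality)
    fix g' assume g': "g' \<in> Fspace B d E \<and> (\<forall>h\<in>Fspace B d E. measure_pmf.expectation \<nu> (\<lambda>x. (f x - g' x) * h x) = 0)"
    then obtain c'' where gc: "g' = lcf ?Lv c''" by (auto simp: Fspace_char)
    let ?dc = "\<lambda>L. c L - c'' L"
    have dlc: "lcf ?Lv ?dc x = ?g x - g' x" for x unfolding gc by (rule lcf_diff)
    have "lcf ?Lv ?dc \<in> Fspace B d E" by (auto simp: Fspace_char)
    then have o2: "(\<Sum>x\<in>?X. pmf \<nu> x * ((f x - g' x) * lcf ?Lv ?dc x)) = 0"
      using g' by (auto simp: expect_grid[OF assms])
    have o1: "(\<Sum>x\<in>?X. pmf \<nu> x * (f x - ?g x) * lcf ?Lv ?dc x) = 0" by (rule orth)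
    have "(\<Sum>x\<in>?X. pmf \<nu> x * (?g x - g' x)^2) = 
        (\<Sum>x\<in>?X. pmf \<nu> x * ((f x - g' x) * lcf ?Lv ?dc x)) - (\<Sum>x\<in>?X. pmf \<nu> x * (f x - ?g x) * lcf ?Lv ?dc x)"
      by (simp add: dlc sum_subtractf[symmetric] power2_eq_square algebra_simps)
    then have "(\<Sum>x\<in>?X. pmf \<nu> x * (?g x - g' x)^2) = 0" using o1 o2 by simp
    then have "\<forall>x\<in>?X. pmf \<nu> x * (?g x - g' x)^2 = 0"
      by (subst sum_nonneg_eq_0_iff[OF grid_finite, symmetric]) auto
    moreover have "\<forall>x\<in>?X. pmf \<nu> x > 0" using assms by (auto simp: pmf_positive)
    ultimately have "\<forall>x\<in>?X. ?g x = g' x" by (metis less_irrefl mult_eq_0_iff power_eq_0_iff right_minus_eq)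
    moreover have "\<forall>x. x \<notin> ?X \<longrightarrow> ?g x = g' x" unfolding gc by (auto simp: lcf_outside)
    ultimately show "g' = ?g" by (metis ext)
  qed (rule P)
  then show ?thesis using orth by (intro exI[of _ c]) auto
qed

lemma projmat_char:
  "\<exists>c. (\<forall>i<n. projmat B d E n xs y i = lcf (ens_leaves B d E) c (xs i)) \<and>
    (\<forall>c'. (\<Sum>i<n. (y i - projmat B d E n xs y i) * lcf (ens_leaves B d E) c' (xs i)) = 0)"
proof -
  let ?Lv = "ens_leaves B d E"
  obtain c where c: "\<forall>c'. (\<Sum>k\<in>{..<n}. 1 * (y k - (\<Sum>a\<in>?Lv. c a * indicator a (xs k))) * (\<Sum>a\<in>?Lv. c' a * indicator a (xs k))) = 0"
    using proj_ex[OF _ _ ens_leaves_finite[of B d E], where K="{..<n}" and w="\<lambda>_. 1" and y=y and \<phi>="\<lambda>L i. indicator L (xs i)"] by auto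
  define v where "v = (\<lambda>i. if i < n then lcf ?Lv c (xs i) else 0)"
  have orth: "(\<Sum>i<n. (y i - v i) * lcf ?Lv c' (xs i)) = 0" for c'
    using c unfolding lcf_def v_def by auto
  have col: "colspace B d E n xs = range (\<lambda>c. (\<lambda>i. if i < n then lcf ?Lv c (xs i) else 0))"
    unfolding colspace_def lcf_def by auto
  have P: "v \<in> colspace B d E n xs \<and> (\<forall>w\<in>colspace B d E n xs. (\<Sum>i<n. (y i - v i) * w i) = 0)"
    using orth unfolding col v_def by auto
  have "projmat B d E n xs y = v"
    unfolding projmat_def
  proof (rule the_equality)
    fix v' assume v': "v' \<in> colspace B d E n xs \<and> (\<forall>w\<in>colspace B d E n xs. (\<Sum>i<n. (y i - v' i) * w i) = 0)"
    then obtain c'' where vc: "v' = (\<lambda>i. if i < n then lcf ?Lv c'' (xs i) else 0)" unfolding col by auto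
    let ?dc = "\<lambda>L. c L - c'' L"
    have "(\<lambda>i. if i < n then lcf ?Lv ?dc (xs i) else 0) \<in> colspace B d E n xs" unfolding col by auto
    then have o2: "(\<Sum>i<n. (y i - v' i) * lcf ?Lv ?dc (xs i)) = 0"
      using v' by (auto dest!: bspec)
    have o1: "(\<Sum>i<n. (y i - v i) * lcf ?Lv ?dc (xs i)) = 0" by (rule orth)
    have "(\<Sum>i<n. (v i - v' i)^2) = (\<Sum>i<n. (y i - v' i) * lcf ?Lv ?dc (xs i)) - (\<Sum>i<n. (y i - v i) * lcf ?Lv ?dc (xs i))"
      unfolding sum_subtractf[symmetric]
      by (intro sum.cong) (auto simp: vc v_def lcf_diff power2_eq_square algebra_simps)
    then have "(\<Sum>i<n. (v i - v' i)^2) = 0" using o1 o2 by simp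
    then have "\<forall>i<n. v i = v' i" by (subst (asm) sum_nonneg_eq_0_iff) auto
    then show "v' = v" by (auto simp: v_def vc)
  qed (rule P)
  then show ?thesis using orth by (intro exI[of _ c]) (auto simp: v_def)
qed

lemma sum_by_point:
  fixes n :: nat
  assumes "\<forall>i<n. xs i \<in> X" "finite X"
  shows "(\<Sum>i<n. F i) = (\<Sum>x\<in>X. \<Sum>i\<in>{i\<in>{..<n}. xs i = x}. F i)"
proof -
  have "xs ` {..<n} \<subseteq> X" using assms by auto
  then show ?thesis using assms(2) by (intro sum.group[symmetric]) auto
qed

lemma quad_bound:
  fixes Q H a b :: real
  assumes "a > 0" "b \<ge> 0" "H \<ge> 0" "a * H^2 \<le> Q" "Q \<le> b * H"
  shows "Q \<le> b^2 / a"
proof -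
  have "a * H^2 \<le> b * H" using assms by linarith
  then have "a * H \<le> b" using assms
    by (cases "H = 0") (auto simp: power2_eq_square mult.assoc[symmetric])
  then have "H \<le> b / a" using assms by (simp add: field_simps)
  then have "b * H \<le> b * (b / a)" using assms by (intro mult_left_mono) auto
  then show ?thesis using assms by (simp add: power2_eq_square)
qed

lemma core:
  fixes xs :: "nat \<Rightarrow> nat \<Rightarrow> nat" and e y :: "nat \<Rightarrow> real" and fstar :: "(nat \<Rightarrow> nat) \<Rightarrow> real"
    and \<nu> :: "(nat \<Rightarrow> nat) pmf" and C m :: real and E :: "tree list" and B d n :: nat
  assumes setp: "set_pmf \<nu> = grid B d"
    and xin: "\<forall>i<n. xs i \<in> grid B d"
    and yd: "\<forall>i<n. y i = fstar (xs i) + e i"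
    and Nb: "\<forall>x\<in>grid B d. \<bar>real (card {i\<in>{..<n}. xs i = x}) - real n * pmf \<nu> x\<bar> \<le> C * sqrt (real n)"
    and Eb: "\<forall>x\<in>grid B d. \<bar>\<Sum>i\<in>{i\<in>{..<n}. xs i = x}. e i\<bar> \<le> C * sqrt (real n)"
    and mpos: "m > 0" and mle: "\<forall>x\<in>grid B d. m \<le> pmf \<nu> x"
    and big: "C * sqrt (real n) \<le> real n * m / 2"
    and npos: "n > 0" and Cpos: "C \<ge> 0"
  defines "r \<equiv> (\<lambda>x. fstar x - proj \<nu> B d E fstar x)"
  shows "\<exists>Q. 0 \<le> Q \<and> Q \<le> 2 * real (card (grid B d)) * C^2 * ((\<Sum>x\<in>grid B d. \<bar>r x\<bar>) + 1)^2 / m \<and>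
     (\<Sum>i<n. y i * (y i - projmat B d E n xs y i)) =
       (\<Sum>x\<in>grid B d. (r x)^2 * real (card {i\<in>{..<n}. xs i = x}))
       + 2 * (\<Sum>x\<in>grid B d. r x * (\<Sum>i\<in>{i\<in>{..<n}. xs i = x}. e i))
       + (\<Sum>i<n. (e i)^2) - Q"
proof -
  let ?X = "grid B d" and ?Lv = "ens_leaves B d E"
  define N where "N x = real (card {i\<in>{..<n}. xs i = x})" for x
  define Ex where "Ex x = (\<Sum>i\<in>{i\<in>{..<n}. xs i = x}. e i)" for x
  define R where "R = (\<Sum>x\<in>?X. \<bar>r x\<bar>)"
  define P where "P = projmat B d E n xs y"
  define g where "g = proj \<nu> B d E fstar"
  obtain c where gc: "g = lcf ?Lv c"
    and orthp: "\<forall>c'. (\<Sum>x\<in>?X. pmf \<nu> x * (fstar x - g x) * lcf ?Lv c' x) = 0"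
    using proj_char[OF setp, of E fstar] unfolding g_def by blast
  obtain cP where Pc: "\<forall>i<n. P i = lcf ?Lv cP (xs i)"
    and orthm: "\<forall>c'. (\<Sum>i<n. (y i - P i) * lcf ?Lv c' (xs i)) = 0"
    using projmat_char[of n B d E xs y] unfolding P_def by blast
  define h where "h = lcf ?Lv (\<lambda>L. cP L - c L)"
  define u where "u i = r (xs i) + e i" for i
  have hP: "h (xs i) = P i - g (xs i)" if "i < n" for i
    using Pc that unfolding h_def gc by (simp add: lcf_diff)
  have yP: "y i - P i = u i - h (xs i)" if "i < n" for i
    using that yd hP unfolding u_def r_def g_def by auto
  have OP: "(\<Sum>i<n. (y i - P i) * P i) = 0"
  proof -
    have "(\<Sum>i<n. (y i - P i) * P i) = (\<Sum>i<n. (y i - P i) * lcf ?Lv cP (xs i))"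
      by (rule sum.cong) (auto simp: Pc)
    then show ?thesis using orthm by simp
  qed
  have Oh: "(\<Sum>i<n. (u i - h (xs i)) * h (xs i)) = 0"
  proof -
    have "(\<Sum>i<n. (u i - h (xs i)) * h (xs i)) = (\<Sum>i<n. (y i - P i) * lcf ?Lv (\<lambda>L. cP L - c L) (xs i))"
      by (rule sum.cong) (auto simp: yP h_def)
    then show ?thesis using orthm by simp
  qed
  define Q where "Q = (\<Sum>i<n. (h (xs i))^2)"
  have Qu: "Q = (\<Sum>i<n. u i * h (xs i))"
  proof -
    have "(\<Sum>i<n. u i * h (xs i)) - Q = (\<Sum>i<n. (u i - h (xs i)) * h (xs i))"
      unfolding Q_def sum_subtractf[symmetric] by (simp add: algebra_simps power2_eq_square)
    then show ?thesis using Oh by simp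
  qed
  have RSS: "(\<Sum>i<n. y i * (y i - P i)) = (\<Sum>i<n. (u i)^2) - Q"
  proof -
    have "(\<Sum>i<n. y i * (y i - P i)) = (\<Sum>i<n. (y i - P i)^2) + (\<Sum>i<n. (y i - P i) * P i)"
      unfolding sum.distrib[symmetric] by (simp add: algebra_simps power2_eq_square)
    also have "\<dots> = (\<Sum>i<n. (u i - h (xs i))^2)" using OP yP by simp
    also have "\<dots> = (\<Sum>i<n. (u i)^2) - 2 * (\<Sum>i<n. u i * h (xs i)) + Q"
      unfolding Q_def sum_distrib_left sum_subtractf[symmetric] sum.distrib[symmetric]
      by (simp add: algebra_simps power2_eq_square)
    finally show ?thesis using Qu by simp
  qed
  have fX: "finite ?X" by (rule grid_finite)
  have u2: "(\<Sum>i<n. (u i)^2) = (\<Sum>x\<in>?X. (r x)^2 * N x) + 2 * (\<Sum>x\<in>?X. r x * Ex x) + (\<Sum>i<n. (e i)^2)"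
  proof -
    have "(\<Sum>i<n. (u i)^2) = (\<Sum>i<n. (r (xs i))^2) + 2 * (\<Sum>i<n. r (xs i) * e i) + (\<Sum>i<n. (e i)^2)"
      unfolding u_def sum_distrib_left sum.distrib[symmetric] by (simp add: algebra_simps power2_eq_square)
    moreover have "(\<Sum>i<n. (r (xs i))^2) = (\<Sum>x\<in>?X. (r x)^2 * N x)"
      unfolding sum_by_point[OF xin fX] N_def by (intro sum.cong refl) auto
    moreover have "(\<Sum>i<n. r (xs i) * e i) = (\<Sum>x\<in>?X. r x * Ex x)"
      unfolding sum_by_point[OF xin fX] Ex_def sum_distrib_left by (intro sum.cong refl) auto
    ultimately show ?thesis by simp
  qed
  have Q0: "Q \<ge> 0" unfolding Q_def by (intro sum_nonneg) auto
  have orth_h: "(\<Sum>x\<in>?X. pmf \<nu> x * r x * h x) = 0"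
    using orthp[rule_format, of "\<lambda>L. cP L - c L"] unfolding h_def[symmetric] r_def g_def .
  have Qx: "Q = (\<Sum>x\<in>?X. h x * r x * (N x - real n * pmf \<nu> x)) + (\<Sum>x\<in>?X. h x * Ex x)"
  proof -
    have "Q = (\<Sum>x\<in>?X. h x * r x * N x + h x * Ex x)"
      unfolding Qu sum_by_point[OF xin fX] N_def Ex_def u_def
      by (intro sum.cong refl) (auto simp: sum_distrib_left sum.distrib algebra_simps)
    also have "\<dots> = (\<Sum>x\<in>?X. h x * r x * (N x - real n * pmf \<nu> x)) + (\<Sum>x\<in>?X. h x * Ex x)
        + real n * (\<Sum>x\<in>?X. pmf \<nu> x * r x * h x)"
      unfolding sum_distrib_left sum.distrib[symmetric] by (intro sum.cong refl) (simp add: algebra_simps)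
    finally show ?thesis using orth_h by simp
  qed
  define H where "H = (\<Sum>x\<in>?X. \<bar>h x\<bar>)"
  have rR: "\<bar>r x\<bar> \<le> R" if "x \<in> ?X" for x
    unfolding R_def using that fX by (intro member_le_sum) auto
  have R0: "R \<ge> 0" unfolding R_def by (intro sum_nonneg) auto
  have Qup: "Q \<le> ((R + 1) * (C * sqrt (real n))) * H"
  proof -
    have "Q \<le> (\<Sum>x\<in>?X. \<bar>h x\<bar> * \<bar>r x\<bar> * \<bar>N x - real n * pmf \<nu> x\<bar>) + (\<Sum>x\<in>?X. \<bar>h x\<bar> * \<bar>Ex x\<bar>)"
      unfolding Qx by (intro add_mono sum_mono) (auto simp: abs_mult[symmetric])
    also have "\<dots> \<le> (\<Sum>x\<in>?X. \<bar>h x\<bar> * R * (C * sqrt (real n))) + (\<Sum>x\<in>?X. \<bar>h x\<bar> * (C * sqrt (real n)))"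
      using Nb Eb rR R0 unfolding N_def Ex_def
      by (intro add_mono sum_mono mult_mono mult_left_mono) auto
    also have "\<dots> = ((R + 1) * (C * sqrt (real n))) * H"
      unfolding H_def sum_distrib_left sum_distrib_right sum.distrib[symmetric] by (intro sum.cong refl) (simp add: algebra_simps)
    finally show ?thesis .
  qed
  have Nlow: "real n * m / 2 \<le> N x" if "x \<in> ?X" for x
  proof -
    have "real n * m \<le> real n * pmf \<nu> x" using mle that by (intro mult_left_mono) auto
    then show ?thesis using Nb that big unfolding N_def by (auto simp: abs_le_iff)
  qed
  have Qlow: "(real n * m / (2 * real (card ?X))) * H^2 \<le> Q"
  proof -
    have cpos: "card ?X > 0" using fX mle mpos
      by (metis card_gt_0_iff empty_iff setp set_pmf_not_empty)
    have "H^2 \<le> (\<Sum>x\<in>?X. (h x)^2) * real (card ?X)"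
      unfolding H_def using sum_squared_le_sum_of_squares[of "\<lambda>x. \<bar>h x\<bar>" ?X] by simp
    then have "(real n * m / (2 * real (card ?X))) * H^2 \<le> (real n * m / 2) * (\<Sum>x\<in>?X. (h x)^2)"
      using cpos mpos by (simp add: field_simps) (smt (verit) mult_left_mono of_nat_0_le_iff mult_nonneg_nonneg)
    also have "\<dots> = (\<Sum>x\<in>?X. (real n * m / 2) * (h x)^2)" by (simp add: sum_distrib_left)
    also have "\<dots> \<le> (\<Sum>x\<in>?X. N x * (h x)^2)"
      using Nlow by (intro sum_mono mult_right_mono) auto
    also have "\<dots> = Q"
      unfolding Q_def sum_by_point[OF xin fX] N_def by (intro sum.cong refl) auto
    finally show ?thesis .
  qed
  have cpos: "card ?X > 0" using fX mle mpos
    by (metis card_gt_0_iff empty_iff setp set_pmf_not_empty)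
  have "Q \<le> ((R + 1) * (C * sqrt (real n)))^2 / (real n * m / (2 * real (card ?X)))"
    by (rule quad_bound[OF _ _ _ Qlow Qup]) (use npos mpos cpos Cpos rR in \<open>auto simp: H_def R_def intro!: sum_nonneg mult_nonneg_nonneg\<close>)
  also have "\<dots> = 2 * real (card ?X) * C^2 * (R + 1)^2 / m"
  proof -
    have "((R + 1) * (C * sqrt (real n)))^2 = (R+1)^2 * C^2 * real n"
      by (simp add: power_mult_distrib)
    then show ?thesis using npos mpos cpos by (simp add: field_simps)
  qed
  finally have Qle: "Q \<le> 2 * real (card ?X) * C^2 * (R + 1)^2 / m" .
  show ?thesis
    using Q0 Qle RSS u2 unfolding P_def[symmetric] R_def N_def Ex_def by (intro exI[of _ Q]) auto
qed

lemma prod_two: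
  assumes "finite I" "i \<in> I" "j \<in> I" "i \<noteq> j"
  shows "(\<Prod>k\<in>I. (if k = i then a k else if k = j then b k else 1)) = a i * (b j :: real)"
proof -
  have "(\<Prod>k\<in>I. (if k = i then a k else if k = j then b k else 1)) =
        (\<Prod>k\<in>I. (if k = i then a k else 1) * (if k = j then b k else 1))"
    using assms by (intro prod.cong) auto
  also have "\<dots> = a i * b j" using assms by (simp add: prod.distrib)
  finally show ?thesis .
qed

lemma second_moment:
  fixes M :: "'a measure" and f :: "'a \<Rightarrow> real" and n :: nat and a :: real
  assumes PM: "prob_space M" and fm[measurable]: "f \<in> borel_measurable M"
    and int2: "integrable M (\<lambda>x. (f x)^2)" and mean0: "integral\<^sup>L M f = 0" and apos: "a > 0"
  shows "{\<omega> \<in> space (PiM {..<n} (\<lambda>_. M)). a \<le> \<bar>\<Sum>i<n. f (\<omega> i)\<bar>} \<in> sets (PiM {..<n} (\<lambda>_. M))"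
    and "measure (PiM {..<n} (\<lambda>_. M)) {\<omega> \<in> space (PiM {..<n} (\<lambda>_. M)). a \<le> \<bar>\<Sum>i<n. f (\<omega> i)\<bar>}
           \<le> real n * integral\<^sup>L M (\<lambda>x. (f x)^2) / a^2"
proof -
  interpret M: prob_space M by (rule PM)
  interpret P: product_prob_space "\<lambda>_. M" "{..<n}"
    by (intro product_prob_space.intro product_prob_space_axioms.intro product_sigma_finite.intro)
       (auto simp: M.sigma_finite_measure PM)
  let ?P = "PiM {..<n} (\<lambda>_. M)"
  let ?I = "{..<n}"
  have fi: "integrable M f" by (rule M.square_integrable_imp_integrable[OF fm int2])
  define S where "S \<omega> = (\<Sum>i<n. f (\<omega> i))" for \<omega>
  have Sm: "S \<in> borel_measurable ?P" unfolding S_def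
  proof (rule borel_measurable_sum)
    fix i assume "i \<in> ?I"
    then show "(\<lambda>\<omega>. f (\<omega> i)) \<in> borel_measurable ?P"
      by (intro measurable_compose[OF measurable_component_singleton[of i ?I "\<lambda>_. M"] fm]) auto
  qed
  have Sa: "(\<lambda>\<omega>. \<bar>S \<omega>\<bar>) \<in> borel_measurable ?P" using Sm by (rule borel_measurable_abs)
  have "{\<omega> \<in> space ?P. a \<le> \<bar>S \<omega>\<bar>} \<in> sets ?P"
    using measurable_sets[OF Sa, of "{a..}"] by (simp add: vimage_def Int_def conj_commute)
  then show "{\<omega> \<in> space ?P. a \<le> \<bar>\<Sum>i<n. f (\<omega> i)\<bar>} \<in> sets ?P" unfolding S_def .
  have T: "integrable ?P (\<lambda>\<omega>. f (\<omega> i) * f (\<omega> j)) \<and>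
           integral\<^sup>L ?P (\<lambda>\<omega>. f (\<omega> i) * f (\<omega> j)) = (if i = j then integral\<^sup>L M (\<lambda>x. (f x)^2) else 0)"
    if ij: "i \<in> ?I" "j \<in> ?I" for i j
  proof (cases "i = j")
    case True
    define G where "G k x = (if k = i then (f x)^2 else 1)" for k x
    have GI: "integrable M (G k)" for k using int2 unfolding G_def by (cases "k = i") (auto simp: M.prob_space)
    have eq: "(\<Prod>k\<in>?I. G k (\<omega> k)) = f (\<omega> i) * f (\<omega> j)" for \<omega>
      using True ij unfolding G_def by (simp add: prod.delta power2_eq_square if_distrib cong: if_cong)
    have ig: "integral\<^sup>L M (G k) = (if k = i then integral\<^sup>L M (\<lambda>x. (f x)^2) else 1)" for k
      unfolding G_def by (cases "k = i") (auto simp: M.prob_space)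
    show ?thesis
      using P.product_integrable_prod[of ?I G] P.product_integral_prod[of ?I G] GI True ij
      unfolding eq ig by (simp add: prod.delta)
  next
    case False
    define G where "G k x = (if k = i then f x else if k = j then f x else 1)" for k x
    have GI: "integrable M (G k)" for k using fi unfolding G_def by (cases "k = i"; cases "k = j") auto
    have eq: "(\<Prod>k\<in>?I. G k (\<omega> k)) = f (\<omega> i) * f (\<omega> j)" for \<omega>
      unfolding G_def by (rule prod_two[OF _ ij False]) simp
    have ig: "integral\<^sup>L M (G k) = (if k = i then integral\<^sup>L M f else if k = j then integral\<^sup>L M f else 1)" for k
      unfolding G_def by (cases "k = i"; cases "k = j") (auto simp: M.prob_space)
    have "(\<Prod>k\<in>?I. integral\<^sup>L M (G k)) = integral\<^sup>L M f * integral\<^sup>L M f"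
      unfolding ig by (rule prod_two[OF _ ij False]) simp
    then show ?thesis
      using P.product_integrable_prod[of ?I G] P.product_integral_prod[of ?I G] GI False ij mean0
      unfolding eq by simp
  qed
  have S2: "(\<lambda>\<omega>. (S \<omega>)^2) = (\<lambda>\<omega>. \<Sum>i\<in>?I. \<Sum>j\<in>?I. f (\<omega> i) * f (\<omega> j))"
    unfolding S_def power2_eq_square by (simp add: sum_product)
  have S2i: "integrable ?P (\<lambda>\<omega>. (S \<omega>)^2)"
    unfolding S2 using T by (intro Bochner_Integration.integrable_sum) auto
  have S2e: "integral\<^sup>L ?P (\<lambda>\<omega>. (S \<omega>)^2) = real n * integral\<^sup>L M (\<lambda>x. (f x)^2)"
  proof -
    have "integral\<^sup>L ?P (\<lambda>\<omega>. (S \<omega>)^2) = (\<Sum>i\<in>?I. \<Sum>j\<in>?I. integral\<^sup>L ?P (\<lambda>\<omega>. f (\<omega> i) * f (\<omega> j)))"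
    proof -
      have "integral\<^sup>L ?P (\<lambda>\<omega>. \<Sum>i\<in>?I. \<Sum>j\<in>?I. f (\<omega> i) * f (\<omega> j)) = (\<Sum>i\<in>?I. integral\<^sup>L ?P (\<lambda>\<omega>. \<Sum>j\<in>?I. f (\<omega> i) * f (\<omega> j)))"
        using T by (intro Bochner_Integration.integral_sum Bochner_Integration.integrable_sum) auto
      also have "\<dots> = (\<Sum>i\<in>?I. \<Sum>j\<in>?I. integral\<^sup>L ?P (\<lambda>\<omega>. f (\<omega> i) * f (\<omega> j)))"
        using T by (intro sum.cong refl Bochner_Integration.integral_sum) auto
      finally show ?thesis unfolding S2 .
    qed
    also have "\<dots> = (\<Sum>i\<in>?I. \<Sum>j\<in>?I. (if i = j then integral\<^sup>L M (\<lambda>x. (f x)^2) else 0))"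
      using T by (intro sum.cong refl) auto
    also have "\<dots> = real n * integral\<^sup>L M (\<lambda>x. (f x)^2)" by simp
    finally show ?thesis .
  qed
  have "measure ?P {\<omega> \<in> space ?P. a^2 \<le> (S \<omega>)^2} \<le> integral\<^sup>L ?P (\<lambda>\<omega>. (S \<omega>)^2) / a^2"
    by (rule integral_Markov_inequality_measure[OF S2i, where A="space ?P"]) (use apos in auto)
  moreover have "{\<omega> \<in> space ?P. a^2 \<le> (S \<omega>)^2} = {\<omega> \<in> space ?P. a \<le> \<bar>\<Sum>i<n. f (\<omega> i)\<bar>}"
    using apos unfolding S_def by (auto simp flip: abs_le_square_iff)
  ultimately show "measure ?P {\<omega> \<in> space ?P. a \<le> \<bar>\<Sum>i<n. f (\<omega> i)\<bar>} \<le> real n * integral\<^sup>L M (\<lambda>x. (f x)^2) / a^2"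
    using S2e by simp
qed

lemma pair_moment:
  fixes \<nu> :: "'a pmf" and N :: "real measure" and g :: "'a \<Rightarrow> real" and h :: "real \<Rightarrow> real"
  assumes fin: "finite (set_pmf \<nu>)" and PN: "prob_space N" and hi: "integrable N h"
  shows "integrable (measure_pmf \<nu> \<Otimes>\<^sub>M N) (\<lambda>p. g (fst p) * h (snd p))"
    and "integral\<^sup>L (measure_pmf \<nu> \<Otimes>\<^sub>M N) (\<lambda>p. g (fst p) * h (snd p)) =
         measure_pmf.expectation \<nu> g * integral\<^sup>L N h"
proof -
  interpret N: prob_space N by (rule PN)
  interpret pair_sigma_finite "measure_pmf \<nu>" N
    by (intro pair_sigma_finite.intro) (auto simp: N.sigma_finite_measure prob_space_imp_sigma_finite prob_space_measure_pmf)
  have hm[measurable]: "h \<in> borel_measurable N" using hi by auto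
  have gm[measurable]: "g \<in> borel_measurable (measure_pmf \<nu>)" by simp
  show I: "integrable (measure_pmf \<nu> \<Otimes>\<^sub>M N) (\<lambda>p. g (fst p) * h (snd p))"
  proof (rule Fubini_integrable)
    show "(\<lambda>p. g (fst p) * h (snd p)) \<in> borel_measurable (measure_pmf \<nu> \<Otimes>\<^sub>M N)" by measurable
    show "integrable (measure_pmf \<nu>) (\<lambda>x. \<integral>y. norm (g (fst (x, y)) * h (snd (x, y))) \<partial>N)"
      by (rule integrable_measure_pmf_finite[OF fin])
    show "AE x in measure_pmf \<nu>. integrable N (\<lambda>y. g (fst (x, y)) * h (snd (x, y)))"
      using hi by auto
  qed
  show "integral\<^sup>L (measure_pmf \<nu> \<Otimes>\<^sub>M N) (\<lambda>p. g (fst p) * h (snd p)) =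
         measure_pmf.expectation \<nu> g * integral\<^sup>L N h"
    using integral_fst'[OF I] by simp
qed

lemma noise_sq:
  assumes PN: "prob_space N" and sN: "sets N = sets borel" and sg: "subgaussian N"
  shows "integrable N (\<lambda>e. e^2)"
proof -
  interpret N: prob_space N by (rule PN)
  have meas: "f \<in> borel_measurable N" if "f \<in> borel_measurable borel" for f :: "real \<Rightarrow> real"
    using that measurable_cong_sets[OF sN refl, of borel] by metis
  have il: "\<forall>l::real. integrable N (\<lambda>e. exp (l * e))" using sg unfolding subgaussian_def by (elim exE conjE) (intro allI, erule_tac x=l in allE, erule conjE)
  have i1: "integrable N (\<lambda>e. exp e)" using spec[OF il, of 1] by simp
  have i2: "integrable N (\<lambda>e. exp (- e))" using spec[OF il, of "-1"] by simp
  have ib: "integrable N (\<lambda>e. 2 * (exp e + exp (- e)))"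
    using integrable_mult_right[OF Bochner_Integration.integrable_add[OF i1 i2], of 2] by simp
  show ?thesis
  proof (rule Bochner_Integration.integrable_bound[OF ib])
    show "(\<lambda>e. e^2) \<in> borel_measurable N" by (rule meas) simp
    show "AE e in N. norm (e^2) \<le> norm (2 * (exp e + exp (- e)))"
    proof (rule AE_I2)
      fix e :: real
      have "1 + \<bar>e\<bar> + \<bar>e\<bar>^2/2 \<le> exp \<bar>e\<bar>" by (rule exp_lower_Taylor_quadratic) simp
      then have "e^2 \<le> 2 * exp \<bar>e\<bar>" by simp
      also have "\<dots> \<le> 2 * (exp e + exp (- e))" by (cases "e \<ge> 0") auto
      finally show "norm (e^2) \<le> norm (2 * (exp e + exp (- e)))" by simp
    qed
  qed
qed

lemma expect_le1:
  fixes \<nu> :: "(nat \<Rightarrow> nat) pmf" and g :: "(nat \<Rightarrow> nat) \<Rightarrow> real"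
  assumes setp: "set_pmf \<nu> = grid B d" and b: "\<forall>a\<in>grid B d. \<bar>g a\<bar> \<le> 1"
  shows "measure_pmf.expectation \<nu> (\<lambda>a. (g a)^2) \<le> 1"
proof -
  have "measure_pmf.expectation \<nu> (\<lambda>a. (g a)^2) = (\<Sum>a\<in>grid B d. pmf \<nu> a * (g a)^2)"
    by (rule expect_grid[OF setp])
  also have "\<dots> \<le> (\<Sum>a\<in>grid B d. pmf \<nu> a * 1)"
  proof (intro sum_mono mult_left_mono)
    fix a assume "a \<in> grid B d"
    then have "\<bar>g a\<bar> \<le> 1" using b by auto
    then show "(g a)^2 \<le> 1" by (simp add: abs_le_iff power2_eq_square) (smt (verit) mult_le_one mult_minus_left mult_minus_right)
  qed auto
  also have "\<dots> = 1" using setp by (simp add: sum_pmf_eq_1 grid_finite)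
  finally show ?thesis .
qed

lemma KP:
  fixes \<nu> :: "(nat \<Rightarrow> nat) pmf" and Noise :: "real measure" and \<delta> :: real
  assumes setp: "set_pmf \<nu> = grid B d" and PN: "prob_space Noise" and sN: "sets Noise = sets borel"
    and cen: "centered Noise" and sg: "subgaussian Noise" and dpos: "\<delta> > 0"
  shows "\<exists>C>0. \<forall>n>0. \<exists>S\<in>sets (data \<nu> Noise n). measure (data \<nu> Noise n) S < \<delta> \<and>
     (\<forall>\<omega>\<in>space (data \<nu> Noise n) - S. (\<forall>i<n. fst (\<omega> i) \<in> grid B d) \<and>
        (\<forall>x\<in>grid B d. \<bar>real (card {i\<in>{..<n}. fst (\<omega> i) = x}) - real n * pmf \<nu> x\<bar> \<le> C * sqrt (real n) \<and>
                      \<bar>\<Sum>i\<in>{i\<in>{..<n}. fst (\<omega> i) = x}. snd (\<omega> i)\<bar> \<le> C * sqrt (real n)))"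
proof -
  let ?X = "grid B d"
  define M0 where "M0 = measure_pmf \<nu> \<Otimes>\<^sub>M Noise"
  interpret N: prob_space Noise by (rule PN)
  have PM0: "prob_space M0" unfolding M0_def by (intro prob_space_pair PN prob_space_measure_pmf)
  have fin: "finite (set_pmf \<nu>)" using setp grid_finite by auto
  have fX: "finite ?X" by (rule grid_finite)
  have ie: "integrable Noise (\<lambda>e. e)" and ie0: "integral\<^sup>L Noise (\<lambda>e. e) = 0"
    using cen unfolding centered_def by auto
  have ie2: "integrable Noise (\<lambda>e. e^2)" by (rule noise_sq[OF PN sN sg])
  define s2 where "s2 = integral\<^sup>L Noise (\<lambda>e. e^2)"
  have s2pos: "s2 \<ge> 0" unfolding s2_def by (intro integral_nonneg_AE) auto
  have SM: "{\<omega>\<in>space (PiM {..<n} (\<lambda>_. M0)). a \<le> \<bar>\<Sum>i<n. g (fst (\<omega> i)) * h (snd (\<omega> i))\<bar>} \<in> sets (PiM {..<n} (\<lambda>_. M0))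
      \<and> measure (PiM {..<n} (\<lambda>_. M0)) {\<omega>\<in>space (PiM {..<n} (\<lambda>_. M0)). a \<le> \<bar>\<Sum>i<n. g (fst (\<omega> i)) * h (snd (\<omega> i))\<bar>}
         \<le> real n * (measure_pmf.expectation \<nu> (\<lambda>x. (g x)^2) * integral\<^sup>L Noise (\<lambda>e. (h e)^2)) / a^2"
    if hi: "integrable Noise h" and hi2: "integrable Noise (\<lambda>e. (h e)^2)"
      and m0: "measure_pmf.expectation \<nu> g * integral\<^sup>L Noise h = 0" and apos: "a > 0"
    for g :: "(nat \<Rightarrow> nat) \<Rightarrow> real" and h :: "real \<Rightarrow> real" and a :: real and n :: nat
  proof -
    let ?f = "\<lambda>p. g (fst p) * h (snd p)"
    have fi: "integrable M0 ?f" and fe: "integral\<^sup>L M0 ?f = 0"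
      using pair_moment[OF fin PN hi, of g] m0 unfolding M0_def by auto
    have sq: "(\<lambda>p. (?f p)^2) = (\<lambda>p. (g (fst p))^2 * (h (snd p))^2)" by (simp add: power_mult_distrib)
    have f2i: "integrable M0 (\<lambda>p. (?f p)^2)" and f2e: "integral\<^sup>L M0 (\<lambda>p. (?f p)^2) =
        measure_pmf.expectation \<nu> (\<lambda>x. (g x)^2) * integral\<^sup>L Noise (\<lambda>e. (h e)^2)"
      unfolding sq M0_def using pair_moment[OF fin PN hi2, of "\<lambda>x. (g x)^2"] by auto
    have fm: "?f \<in> borel_measurable M0" using fi by auto
    show ?thesis using second_moment[OF PM0 fm f2i fe apos, of n] f2e by simp
  qed
  define C where "C = 1 + real (card ?X) * (1 + s2) / \<delta>"
  have C1: "C \<ge> 1" unfolding C_def using dpos s2pos by auto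
  have CX: "real (card ?X) * (1 + s2) < \<delta> * C^2"
  proof -
    have "real (card ?X) * (1 + s2) < \<delta> * C" unfolding C_def using dpos by (simp add: field_simps)
    also have "\<dots> \<le> \<delta> * C^2" using C1 dpos by (intro mult_left_mono) (auto simp: power2_eq_square)
    finally show ?thesis .
  qed
  have Epmf: "measure_pmf.expectation \<nu> g = (\<Sum>a\<in>?X. pmf \<nu> a * g a)" for g
    by (rule expect_grid[OF setp])
  have sum1: "(\<Sum>a\<in>?X. pmf \<nu> a) = 1" using setp by (simp add: sum_pmf_eq_1 fX)
  have one_i: "integrable Noise (\<lambda>_. 1::real)" and one_e: "integral\<^sup>L Noise (\<lambda>_. 1::real) = 1"
    by (auto simp: N.prob_space)
  show ?thesis
  proof (intro exI[of _ C] conjI allI impI)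
    show "C > 0" using C1 by simp
    fix n :: nat assume npos: "n > 0"
    let ?P = "data \<nu> Noise n"
    have Pdef: "?P = PiM {..<n} (\<lambda>_. M0)" unfolding data_def M0_def ..
    define a where "a = C * sqrt (real n)"
    have apos: "a > 0" unfolding a_def using C1 npos by simp
    have a2: "a^2 = C^2 * real n" unfolding a_def by (simp add: power_mult_distrib)
    define B0 where "B0 = {\<omega>\<in>space ?P. 1/2 \<le> \<bar>\<Sum>i<n. indicator (- ?X) (fst (\<omega> i)) * (\<lambda>_. 1::real) (snd (\<omega> i))\<bar>}"
    define B1 where "B1 x = {\<omega>\<in>space ?P. a \<le> \<bar>\<Sum>i<n. (indicator {x} (fst (\<omega> i)) - pmf \<nu> x) * (\<lambda>_. 1::real) (snd (\<omega> i))\<bar>}" for x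
    define B2 where "B2 x = {\<omega>\<in>space ?P. a \<le> \<bar>\<Sum>i<n. indicator {x} (fst (\<omega> i)) * (\<lambda>e. e) (snd (\<omega> i))\<bar>}" for x
    have g0e: "measure_pmf.expectation \<nu> (indicator (- ?X) :: (nat \<Rightarrow> nat) \<Rightarrow> real) = 0"
      unfolding Epmf by (intro sum.neutral) auto
    have g0e2: "measure_pmf.expectation \<nu> (\<lambda>x. (indicator (- ?X) x :: real)^2) = 0"
      unfolding Epmf by (intro sum.neutral) auto
    have B0: "B0 \<in> sets ?P \<and> measure ?P B0 \<le> 0"
      using SM[OF one_i, of "indicator (- ?X)" "1/2" n] g0e g0e2 unfolding B0_def Pdef by (simp add: N.prob_space)
    have B1: "B1 x \<in> sets ?P \<and> measure ?P (B1 x) \<le> 1 / C^2" if x: "x \<in> ?X" for x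
    proof -
      let ?g = "\<lambda>y. indicator {x} y - pmf \<nu> x"
      have ge: "measure_pmf.expectation \<nu> ?g = 0"
      proof -
        have e1: "pmf \<nu> a * indicator {x} a = (if x = a then pmf \<nu> x else 0)" for a
          by (simp add: indicator_def)
        have "(\<Sum>a\<in>?X. pmf \<nu> a * ?g a) = (\<Sum>a\<in>?X. pmf \<nu> a * indicator {x} a) - pmf \<nu> x * (\<Sum>a\<in>?X. pmf \<nu> a)"
          by (simp add: algebra_simps sum_subtractf sum_distrib_left)
        also have "\<dots> = 0" unfolding e1 sum1 using x fX by simp
        finally show ?thesis unfolding Epmf .
      qed
      have gb: "\<forall>y\<in>?X. \<bar>?g y\<bar> \<le> 1" using pmf_le_1[of \<nu> x] pmf_nonneg[of \<nu> x] by (auto simp: indicator_def)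
      have ge2: "measure_pmf.expectation \<nu> (\<lambda>y. (?g y)^2) \<le> 1" by (rule expect_le1[OF setp gb])
      have "B1 x \<in> sets ?P \<and> measure ?P (B1 x) \<le> real n * (measure_pmf.expectation \<nu> (\<lambda>y. (?g y)^2) * 1) / a^2"
        using SM[OF one_i, of ?g a n] ge apos unfolding B1_def Pdef by (simp add: N.prob_space)
      moreover have "real n * (measure_pmf.expectation \<nu> (\<lambda>y. (?g y)^2) * 1) / a^2 \<le> 1 / C^2"
        using ge2 npos C1 unfolding a2 by (simp add: field_simps)
      ultimately show ?thesis by linarith
    qed
    have B2: "B2 x \<in> sets ?P \<and> measure ?P (B2 x) \<le> s2 / C^2" if x: "x \<in> ?X" for x
    proof -
      have gb: "\<forall>y\<in>?X. \<bar>indicator {x} y :: real\<bar> \<le> 1" by (auto simp: indicator_def)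
      have ge2: "measure_pmf.expectation \<nu> (\<lambda>y. (indicator {x} y :: real)^2) \<le> 1" by (rule expect_le1[OF setp gb])
      have "B2 x \<in> sets ?P \<and> measure ?P (B2 x) \<le> real n * (measure_pmf.expectation \<nu> (\<lambda>y. (indicator {x} y :: real)^2) * s2) / a^2"
        using SM[OF ie ie2, of "indicator {x}" a n] ie0 apos unfolding B2_def Pdef s2_def by simp
      moreover have "real n * (measure_pmf.expectation \<nu> (\<lambda>y. (indicator {x} y :: real)^2) * s2) / a^2 \<le> s2 / C^2"
        using ge2 npos C1 s2pos unfolding a2 by (simp add: field_simps mult_left_le)
      ultimately show ?thesis by linarith
    qed
    define S where "S = B0 \<union> (\<Union>x\<in>?X. B1 x \<union> B2 x)"
    have Ssets: "S \<in> sets ?P" unfolding S_def using B0 B1 B2 fX by (intro sets.Un sets.finite_UN) auto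
    have "measure ?P S \<le> measure ?P B0 + measure ?P (\<Union>x\<in>?X. B1 x \<union> B2 x)"
      unfolding S_def using B0 B1 B2 fX by (intro measure_Un_le sets.finite_UN) auto
    also have "\<dots> \<le> 0 + (\<Sum>x\<in>?X. measure ?P (B1 x \<union> B2 x))"
      using B0 B1 B2 fX by (intro add_mono measure_UNION_le) auto
    also have "\<dots> \<le> 0 + (\<Sum>x\<in>?X. 1 / C^2 + s2 / C^2)"
      using B1 B2 by (intro add_mono sum_mono order.trans[OF measure_Un_le] ) auto
    also have "\<dots> = real (card ?X) * (1 + s2) / C^2" by (simp add: add_divide_distrib[symmetric])
    also have "\<dots> < \<delta>" using CX C1 by (simp add: field_simps)
    finally have Sm: "measure ?P S < \<delta>" .
    show "\<exists>S\<in>sets ?P. measure ?P S < \<delta> \<and>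
     (\<forall>\<omega>\<in>space ?P - S. (\<forall>i<n. fst (\<omega> i) \<in> ?X) \<and>
        (\<forall>x\<in>?X. \<bar>real (card {i\<in>{..<n}. fst (\<omega> i) = x}) - real n * pmf \<nu> x\<bar> \<le> C * sqrt (real n) \<and>
                      \<bar>\<Sum>i\<in>{i\<in>{..<n}. fst (\<omega> i) = x}. snd (\<omega> i)\<bar> \<le> C * sqrt (real n)))"
    proof (intro bexI[OF _ Ssets] conjI Sm ballI allI impI)
      fix \<omega> assume \<omega>: "\<omega> \<in> space ?P - S"
      have n0: "\<omega> \<notin> B0" and n1: "\<And>x. x \<in> ?X \<Longrightarrow> \<omega> \<notin> B1 x" and n2: "\<And>x. x \<in> ?X \<Longrightarrow> \<omega> \<notin> B2 x"
        using \<omega> unfolding S_def by auto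
      have sp: "\<omega> \<in> space ?P" using \<omega> by auto
      show "fst (\<omega> i) \<in> ?X" if "i < n" for i
      proof (rule ccontr)
        assume "fst (\<omega> i) \<notin> ?X"
        then have "1 \<le> (\<Sum>i<n. indicator (- ?X) (fst (\<omega> i)) :: real)"
        proof -
          have "(\<lambda>i. indicator (- ?X) (fst (\<omega> i)) :: real) i \<le> (\<Sum>i<n. indicator (- ?X) (fst (\<omega> i)) :: real)"
            by (rule member_le_sum) (use that in auto)
          then show ?thesis using \<open>fst (\<omega> i) \<notin> ?X\<close> by simp
        qed
        then show False using n0 sp unfolding B0_def by auto
      qed
      fix x assume x: "x \<in> ?X"
      have cnt: "(\<Sum>i<n. indicator {x} (fst (\<omega> i)) :: real) = real (card {i\<in>{..<n}. fst (\<omega> i) = x})"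
        by (simp add: sum.inter_filter[symmetric] indicator_def of_bool_def)
      have cnt2: "(\<Sum>i<n. indicator {x} (fst (\<omega> i)) * snd (\<omega> i)) = (\<Sum>i\<in>{i\<in>{..<n}. fst (\<omega> i) = x}. snd (\<omega> i))"
      proof -
        have "(\<Sum>i<n. indicator {x} (fst (\<omega> i)) * snd (\<omega> i)) = (\<Sum>i<n. if fst (\<omega> i) = x then snd (\<omega> i) else 0)"
          by (intro sum.cong) (auto simp: indicator_def)
        also have "\<dots> = (\<Sum>i\<in>{i\<in>{..<n}. fst (\<omega> i) = x}. snd (\<omega> i))"
          by (rule sum.inter_filter[symmetric]) simp
        finally show ?thesis .
      qed
      have "\<not> a \<le> \<bar>\<Sum>i<n. (indicator {x} (fst (\<omega> i)) - pmf \<nu> x)\<bar>" using n1[OF x] sp unfolding B1_def by simp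
      then show "\<bar>real (card {i\<in>{..<n}. fst (\<omega> i) = x}) - real n * pmf \<nu> x\<bar> \<le> C * sqrt (real n)"
        unfolding a_def sum_subtractf cnt by simp
      have "\<not> a \<le> \<bar>\<Sum>i<n. indicator {x} (fst (\<omega> i)) * snd (\<omega> i)\<bar>" using n2[OF x] sp unfolding B2_def by simp
      then show "\<bar>\<Sum>i\<in>{i\<in>{..<n}. fst (\<omega> i) = x}. snd (\<omega> i)\<bar> \<le> C * sqrt (real n)"
        unfolding a_def cnt2 by simp
    qed
  qed
qed

lemma sum_bound:
  fixes w u :: "'a \<Rightarrow> real"
  assumes "finite X" "\<forall>x\<in>X. \<bar>u x\<bar> \<le> c"
  shows "\<bar>\<Sum>x\<in>X. w x * u x\<bar> \<le> (\<Sum>x\<in>X. \<bar>w x\<bar>) * c"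
proof -
  have "\<bar>\<Sum>x\<in>X. w x * u x\<bar> \<le> (\<Sum>x\<in>X. \<bar>w x * u x\<bar>)" by (rule sum_abs)
  also have "\<dots> \<le> (\<Sum>x\<in>X. \<bar>w x\<bar> * c)"
    using assms by (intro sum_mono) (auto simp: abs_mult intro: mult_left_mono)
  also have "\<dots> = (\<Sum>x\<in>X. \<bar>w x\<bar>) * c" by (simp add: sum_distrib_right)
  finally show ?thesis .
qed

lemma ln_le_sqrt:
  assumes "1 \<le> real n"
  shows "ln (real n) \<le> 2 * sqrt (real n)"
proof -
  have "ln (sqrt (real n)) \<le> sqrt (real n) - 1" using assms by (intro ln_le_minus_one) auto
  moreover have "ln (sqrt (real n)) = ln (real n) / 2" using assms by (simp add: ln_sqrt)
  ultimately show ?thesis by simp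
qed

theorem proposition4p1:
  fixes B d m :: nat and fstar :: "(nat \<Rightarrow> nat) \<Rightarrow> real" and \<nu> :: "(nat \<Rightarrow> nat) pmf"
    and Noise :: "real measure" and \<sigma>2 :: real and E E' :: "tree list"
  assumes "B \<ge> 1" and "d \<ge> 1" and "m \<ge> 1"
    and "set_pmf \<nu> = grid B d"
    and "prob_space Noise" and "sets Noise = sets borel"
    and "centered Noise" and "subgaussian Noise"
    and "\<sigma>2 > 0"
    and "E \<in> TSE B d m" and "E' \<in> TSE B d m"
  shows "bigO_P (data \<nu> Noise)
           (\<lambda>n \<omega>. (BIC \<sigma>2 B d E n (covs \<omega>) (resp fstar \<omega>) - BIC \<sigma>2 B d E' n (covs \<omega>) (resp fstar \<omega>))
                  - real n / \<sigma>2 * (bias2 \<nu> B d E fstar - bias2 \<nu> B d E' fstar))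
           (\<lambda>n. sqrt (real n))
       \<and> ((\<forall>x\<in>grid B d. proj \<nu> B d E fstar x = proj \<nu> B d E' fstar x) \<longrightarrow>
          bigO_P (data \<nu> Noise)
           (\<lambda>n \<omega>. (BIC \<sigma>2 B d E n (covs \<omega>) (resp fstar \<omega>) - BIC \<sigma>2 B d E' n (covs \<omega>) (resp fstar \<omega>))
                  - (real (df B d E) - real (df B d E')) * ln (real n))
           (\<lambda>n. 1))"
proof -
  let ?X = "grid B d"
  let ?P = "data \<nu> Noise"
  note setp = assms(4)
  have fX: "finite ?X" by (rule grid_finite)
  have Xne: "?X \<noteq> {}" using setp set_pmf_not_empty by metis
  define mm where "mm = Min (pmf \<nu> ` ?X)"
  have mle: "\<forall>x\<in>?X. mm \<le> pmf \<nu> x" unfolding mm_def using fX by auto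
  have mpos: "mm > 0" unfolding mm_def using fX Xne setp by (auto simp: pmf_positive)
  define r where "r x = fstar x - proj \<nu> B d E fstar x" for x
  define r' where "r' x = fstar x - proj \<nu> B d E' fstar x" for x
  define K where "K C = 2 * real (card ?X) * C^2 * ((\<Sum>x\<in>?X. \<bar>r x\<bar>) + 1)^2 / mm" for C
  define K' where "K' C = 2 * real (card ?X) * C^2 * ((\<Sum>x\<in>?X. \<bar>r' x\<bar>) + 1)^2 / mm" for C
  have K0: "K C \<ge> 0" "K' C \<ge> 0" for C unfolding K_def K'_def using mpos by auto
  define RSS where "RSS F n \<omega> = (\<Sum>i<n. resp fstar \<omega> i * (resp fstar \<omega> i - projmat B d F n (covs \<omega>) (resp fstar \<omega>) i))"
    for F n \<omega>
  define Nc where "Nc n \<omega> x = real (card {i\<in>{..<n}. fst (\<omega> i) = x})" for n and \<omega> :: "nat \<Rightarrow> (nat \<Rightarrow> nat) \<times> real" and x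
  define Ex where "Ex n \<omega> x = (\<Sum>i\<in>{i\<in>{..<n}. fst (\<omega> i) = x}. snd (\<omega> i))" for n and \<omega> :: "nat \<Rightarrow> (nat \<Rightarrow> nat) \<times> real" and x
  define SE where "SE n \<omega> = (\<Sum>i<n. (snd (\<omega> i))^2)" for n and \<omega> :: "nat \<Rightarrow> (nat \<Rightarrow> nat) \<times> real"
  have BICd: "BIC \<sigma>2 B d E n (covs \<omega>) (resp fstar \<omega>) - BIC \<sigma>2 B d E' n (covs \<omega>) (resp fstar \<omega>) =
      (RSS E n \<omega> - RSS E' n \<omega>) / \<sigma>2 + (real (df B d E) - real (df B d E')) * ln (real n)" for n \<omega>
    unfolding BIC_def RSS_def by (simp add: diff_divide_distrib algebra_simps)
  have biasE: "bias2 \<nu> B d E fstar = (\<Sum>x\<in>?X. pmf \<nu> x * (r x)^2)"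
    unfolding bias2_def r_def by (rule expect_grid[OF setp])
  have biasE': "bias2 \<nu> B d E' fstar = (\<Sum>x\<in>?X. pmf \<nu> x * (r' x)^2)"
    unfolding bias2_def r'_def by (rule expect_grid[OF setp])
  have master: "\<exists>C>0. \<exists>Nr>0. \<forall>n. real n > Nr \<longrightarrow> (\<exists>S\<in>sets (?P n). measure (?P n) S < \<delta> \<and>
      (\<forall>\<omega>\<in>space (?P n) - S. 1 \<le> real n \<and>
        (\<forall>x\<in>?X. \<bar>Nc n \<omega> x - real n * pmf \<nu> x\<bar> \<le> C * sqrt (real n) \<and> \<bar>Ex n \<omega> x\<bar> \<le> C * sqrt (real n)) \<and>
        (\<exists>Q Q'. 0 \<le> Q \<and> Q \<le> K C \<and> 0 \<le> Q' \<and> Q' \<le> K' C \<and>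
          RSS E n \<omega> = (\<Sum>x\<in>?X. (r x)^2 * Nc n \<omega> x) + 2 * (\<Sum>x\<in>?X. r x * Ex n \<omega> x) + SE n \<omega> - Q \<and>
          RSS E' n \<omega> = (\<Sum>x\<in>?X. (r' x)^2 * Nc n \<omega> x) + 2 * (\<Sum>x\<in>?X. r' x * Ex n \<omega> x) + SE n \<omega> - Q')))"
    if dpos: "0 < \<delta>" for \<delta>
  proof -
    obtain C where Cpos: "C > 0" and KPC: "\<forall>n>0. \<exists>S\<in>sets (?P n). measure (?P n) S < \<delta> \<and>
     (\<forall>\<omega>\<in>space (?P n) - S. (\<forall>i<n. fst (\<omega> i) \<in> ?X) \<and>
        (\<forall>x\<in>?X. \<bar>real (card {i\<in>{..<n}. fst (\<omega> i) = x}) - real n * pmf \<nu> x\<bar> \<le> C * sqrt (real n) \<and>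
                      \<bar>\<Sum>i\<in>{i\<in>{..<n}. fst (\<omega> i) = x}. snd (\<omega> i)\<bar> \<le> C * sqrt (real n)))"
      using KP[OF setp assms(5,6,7,8) dpos] by blast
    define Nr where "Nr = (2 * C / mm)^2 + 1"
    show ?thesis
    proof (rule exI[of _ C], rule conjI[OF Cpos], rule exI[of _ Nr], intro conjI allI impI)
      show "Nr > 0" unfolding Nr_def by (smt (verit) zero_le_power2)
      fix n assume nN: "real n > Nr"
      have n1: "1 \<le> real n" using nN unfolding Nr_def by (smt (verit) zero_le_power2)
      have npos: "n > 0" using n1 by simp
      have big: "C * sqrt (real n) \<le> real n * mm / 2"
      proof -
        have "(2 * C / mm)^2 \<le> real n" using nN unfolding Nr_def by simp
        then have "2 * C / mm \<le> sqrt (real n)" by (rule real_le_rsqrt)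
        then have "2 * C \<le> mm * sqrt (real n)" using mpos by (simp add: field_simps)
        then have "2 * C * sqrt (real n) \<le> mm * sqrt (real n) * sqrt (real n)"
          by (intro mult_right_mono) auto
        moreover have "mm * sqrt (real n) * sqrt (real n) = real n * mm" by simp
        ultimately show ?thesis by linarith
      qed
      obtain S where S1: "S \<in> sets (?P n)" and S2: "measure (?P n) S < \<delta>"
        and good: "\<forall>\<omega>\<in>space (?P n) - S. (\<forall>i<n. fst (\<omega> i) \<in> ?X) \<and>
        (\<forall>x\<in>?X. \<bar>real (card {i\<in>{..<n}. fst (\<omega> i) = x}) - real n * pmf \<nu> x\<bar> \<le> C * sqrt (real n) \<and>
                      \<bar>\<Sum>i\<in>{i\<in>{..<n}. fst (\<omega> i) = x}. snd (\<omega> i)\<bar> \<le> C * sqrt (real n))"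
        using KPC npos by blast
      show "\<exists>S\<in>sets (?P n). measure (?P n) S < \<delta> \<and>
      (\<forall>\<omega>\<in>space (?P n) - S. 1 \<le> real n \<and>
        (\<forall>x\<in>?X. \<bar>Nc n \<omega> x - real n * pmf \<nu> x\<bar> \<le> C * sqrt (real n) \<and> \<bar>Ex n \<omega> x\<bar> \<le> C * sqrt (real n)) \<and>
        (\<exists>Q Q'. 0 \<le> Q \<and> Q \<le> K C \<and> 0 \<le> Q' \<and> Q' \<le> K' C \<and>
          RSS E n \<omega> = (\<Sum>x\<in>?X. (r x)^2 * Nc n \<omega> x) + 2 * (\<Sum>x\<in>?X. r x * Ex n \<omega> x) + SE n \<omega> - Q \<and>
          RSS E' n \<omega> = (\<Sum>x\<in>?X. (r' x)^2 * Nc n \<omega> x) + 2 * (\<Sum>x\<in>?X. r' x * Ex n \<omega> x) + SE n \<omega> - Q'))"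
      proof (rule bexI[OF _ S1], rule conjI[OF S2], rule ballI)
        fix \<omega> assume \<omega>: "\<omega> \<in> space (?P n) - S"
        have g1: "\<forall>i<n. fst (\<omega> i) \<in> ?X"
          and g2: "\<forall>x\<in>?X. \<bar>real (card {i\<in>{..<n}. fst (\<omega> i) = x}) - real n * pmf \<nu> x\<bar> \<le> C * sqrt (real n) \<and>
                      \<bar>\<Sum>i\<in>{i\<in>{..<n}. fst (\<omega> i) = x}. snd (\<omega> i)\<bar> \<le> C * sqrt (real n)"
          using good \<omega> by auto
        have h2: "\<forall>x\<in>?X. \<bar>Nc n \<omega> x - real n * pmf \<nu> x\<bar> \<le> C * sqrt (real n) \<and> \<bar>Ex n \<omega> x\<bar> \<le> C * sqrt (real n)"
          using g2 unfolding Nc_def Ex_def by simp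
        have cv: "covs \<omega> = (\<lambda>i. fst (\<omega> i))" by (rule ext) (simp add: covs_def)
        have yd: "\<forall>i<n. resp fstar \<omega> i = fstar (fst (\<omega> i)) + snd (\<omega> i)" by (simp add: resp_def)
        have Nb: "\<forall>x\<in>?X. \<bar>real (card {i\<in>{..<n}. fst (\<omega> i) = x}) - real n * pmf \<nu> x\<bar> \<le> C * sqrt (real n)"
          and Eb: "\<forall>x\<in>?X. \<bar>\<Sum>i\<in>{i\<in>{..<n}. fst (\<omega> i) = x}. snd (\<omega> i)\<bar> \<le> C * sqrt (real n)"
          using g2 by auto
        obtain Q where Q: "0 \<le> Q" "Q \<le> K C"
          "RSS E n \<omega> = (\<Sum>x\<in>?X. (r x)^2 * Nc n \<omega> x) + 2 * (\<Sum>x\<in>?X. r x * Ex n \<omega> x) + SE n \<omega> - Q"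
          using core[OF setp g1 yd Nb Eb mpos mle big npos less_imp_le[OF Cpos], of E]
          unfolding RSS_def cv K_def r_def Nc_def Ex_def SE_def by blast
        obtain Q' where Q': "0 \<le> Q'" "Q' \<le> K' C"
          "RSS E' n \<omega> = (\<Sum>x\<in>?X. (r' x)^2 * Nc n \<omega> x) + 2 * (\<Sum>x\<in>?X. r' x * Ex n \<omega> x) + SE n \<omega> - Q'"
          using core[OF setp g1 yd Nb Eb mpos mle big npos less_imp_le[OF Cpos], of E']
          unfolding RSS_def cv K'_def r'_def Nc_def Ex_def SE_def by blast
        show "1 \<le> real n \<and>
        (\<forall>x\<in>?X. \<bar>Nc n \<omega> x - real n * pmf \<nu> x\<bar> \<le> C * sqrt (real n) \<and> \<bar>Ex n \<omega> x\<bar> \<le> C * sqrt (real n)) \<and>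
        (\<exists>Q Q'. 0 \<le> Q \<and> Q \<le> K C \<and> 0 \<le> Q' \<and> Q' \<le> K' C \<and>
          RSS E n \<omega> = (\<Sum>x\<in>?X. (r x)^2 * Nc n \<omega> x) + 2 * (\<Sum>x\<in>?X. r x * Ex n \<omega> x) + SE n \<omega> - Q \<and>
          RSS E' n \<omega> = (\<Sum>x\<in>?X. (r' x)^2 * Nc n \<omega> x) + 2 * (\<Sum>x\<in>?X. r' x * Ex n \<omega> x) + SE n \<omega> - Q')"
          using n1 h2 Q Q' by blast
      qed
    qed
  qed
  have sqrt1: "1 \<le> sqrt (real n)" if "1 \<le> real n" for n using that by simp
  show ?thesis
  proof (intro conjI impI)
    show "bigO_P ?P
           (\<lambda>n \<omega>. (BIC \<sigma>2 B d E n (covs \<omega>) (resp fstar \<omega>) - BIC \<sigma>2 B d E' n (covs \<omega>) (resp fstar \<omega>))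
                  - real n / \<sigma>2 * (bias2 \<nu> B d E fstar - bias2 \<nu> B d E' fstar))
           (\<lambda>n. sqrt (real n))"
      unfolding bigO_P_def
    proof (intro allI impI)
      fix \<delta> :: real assume \<delta>: "0 < \<delta> \<and> \<delta> < 1"
      obtain C Nr where Cpos: "C > 0" and Nrpos: "Nr > 0" and M: "\<forall>n. real n > Nr \<longrightarrow> (\<exists>S\<in>sets (?P n). measure (?P n) S < \<delta> \<and>
      (\<forall>\<omega>\<in>space (?P n) - S. 1 \<le> real n \<and>
        (\<forall>x\<in>?X. \<bar>Nc n \<omega> x - real n * pmf \<nu> x\<bar> \<le> C * sqrt (real n) \<and> \<bar>Ex n \<omega> x\<bar> \<le> C * sqrt (real n)) \<and>
        (\<exists>Q Q'. 0 \<le> Q \<and> Q \<le> K C \<and> 0 \<le> Q' \<and> Q' \<le> K' C \<and>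
          RSS E n \<omega> = (\<Sum>x\<in>?X. (r x)^2 * Nc n \<omega> x) + 2 * (\<Sum>x\<in>?X. r x * Ex n \<omega> x) + SE n \<omega> - Q \<and>
          RSS E' n \<omega> = (\<Sum>x\<in>?X. (r' x)^2 * Nc n \<omega> x) + 2 * (\<Sum>x\<in>?X. r' x * Ex n \<omega> x) + SE n \<omega> - Q')))"
        using master[of \<delta>] \<delta> by blast
      define T1 where "T1 = (\<Sum>x\<in>?X. \<bar>(r x)^2 - (r' x)^2\<bar>)"
      define T2 where "T2 = (\<Sum>x\<in>?X. \<bar>r x - r' x\<bar>)"
      define W where "W = C * T1 + 2 * C * T2 + K C + K' C"
      define Dd where "Dd = \<bar>real (df B d E) - real (df B d E')\<bar>"
      define Cst where "Cst = W / \<sigma>2 + 2 * Dd + 1"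
      have T10: "T1 \<ge> 0" unfolding T1_def by (intro sum_nonneg) auto
      have T20: "T2 \<ge> 0" unfolding T2_def by (intro sum_nonneg) auto
      have W0: "W \<ge> 0" unfolding W_def using T10 T20 Cpos K0[of C] by auto
      have Cstpos: "Cst > 0" unfolding Cst_def Dd_def using W0 assms(9) by (simp add: add_nonneg_pos)
      show "\<exists>N C. N > 0 \<and> C > 0 \<and> (\<forall>n. real n > N \<longrightarrow>
            (\<exists>S\<in>sets (?P n). {\<omega>\<in>space (?P n). \<bar>((BIC \<sigma>2 B d E n (covs \<omega>) (resp fstar \<omega>) - BIC \<sigma>2 B d E' n (covs \<omega>) (resp fstar \<omega>))
                  - real n / \<sigma>2 * (bias2 \<nu> B d E fstar - bias2 \<nu> B d E' fstar)) / sqrt (real n)\<bar> > C} \<subseteq> S \<and> measure (?P n) S < \<delta>))"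
      proof (rule exI[of _ Nr], rule exI[of _ Cst], intro conjI allI impI Nrpos Cstpos)
        fix n assume nN: "real n > Nr"
        obtain S where S1: "S \<in> sets (?P n)" and S2: "measure (?P n) S < \<delta>" and good: "\<forall>\<omega>\<in>space (?P n) - S. 1 \<le> real n \<and>
          (\<forall>x\<in>?X. \<bar>Nc n \<omega> x - real n * pmf \<nu> x\<bar> \<le> C * sqrt (real n) \<and> \<bar>Ex n \<omega> x\<bar> \<le> C * sqrt (real n)) \<and>
          (\<exists>Q Q'. 0 \<le> Q \<and> Q \<le> K C \<and> 0 \<le> Q' \<and> Q' \<le> K' C \<and>
            RSS E n \<omega> = (\<Sum>x\<in>?X. (r x)^2 * Nc n \<omega> x) + 2 * (\<Sum>x\<in>?X. r x * Ex n \<omega> x) + SE n \<omega> - Q \<and>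
            RSS E' n \<omega> = (\<Sum>x\<in>?X. (r' x)^2 * Nc n \<omega> x) + 2 * (\<Sum>x\<in>?X. r' x * Ex n \<omega> x) + SE n \<omega> - Q')"
          using M nN by blast
        show "\<exists>S\<in>sets (?P n). {\<omega>\<in>space (?P n). \<bar>((BIC \<sigma>2 B d E n (covs \<omega>) (resp fstar \<omega>) - BIC \<sigma>2 B d E' n (covs \<omega>) (resp fstar \<omega>))
                  - real n / \<sigma>2 * (bias2 \<nu> B d E fstar - bias2 \<nu> B d E' fstar)) / sqrt (real n)\<bar> > Cst} \<subseteq> S \<and> measure (?P n) S < \<delta>"
        proof (rule bexI[OF _ S1], rule conjI[OF _ S2], rule subsetI)
          fix \<omega> assume \<omega>: "\<omega> \<in> {\<omega>\<in>space (?P n). \<bar>((BIC \<sigma>2 B d E n (covs \<omega>) (resp fstar \<omega>) - BIC \<sigma>2 B d E' n (covs \<omega>) (resp fstar \<omega>))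
                  - real n / \<sigma>2 * (bias2 \<nu> B d E fstar - bias2 \<nu> B d E' fstar)) / sqrt (real n)\<bar> > Cst}"
          show "\<omega> \<in> S"
          proof (rule ccontr)
            assume "\<omega> \<notin> S"
            then have \<omega>g: "\<omega> \<in> space (?P n) - S" using \<omega> by auto
            have n1: "1 \<le> real n" using good \<omega>g by blast
            have bnd: "\<forall>x\<in>?X. \<bar>Nc n \<omega> x - real n * pmf \<nu> x\<bar> \<le> C * sqrt (real n) \<and> \<bar>Ex n \<omega> x\<bar> \<le> C * sqrt (real n)"
              using good \<omega>g by blast
            obtain Q Q' where Q: "0 \<le> Q" "Q \<le> K C" "0 \<le> Q'" "Q' \<le> K' C"
              "RSS E n \<omega> = (\<Sum>x\<in>?X. (r x)^2 * Nc n \<omega> x) + 2 * (\<Sum>x\<in>?X. r x * Ex n \<omega> x) + SE n \<omega> - Q"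
              "RSS E' n \<omega> = (\<Sum>x\<in>?X. (r' x)^2 * Nc n \<omega> x) + 2 * (\<Sum>x\<in>?X. r' x * Ex n \<omega> x) + SE n \<omega> - Q'"
              using good \<omega>g by blast
            define sn where "sn = sqrt (real n)"
            have sn1: "1 \<le> sn" unfolding sn_def using n1 by simp
            define D where "D = RSS E n \<omega> - RSS E' n \<omega> - real n * (bias2 \<nu> B d E fstar - bias2 \<nu> B d E' fstar)"
            have Deq: "D = (\<Sum>x\<in>?X. ((r x)^2 - (r' x)^2) * (Nc n \<omega> x - real n * pmf \<nu> x))
                + 2 * (\<Sum>x\<in>?X. (r x - r' x) * Ex n \<omega> x) - Q + Q'"
            proof -
              have e1: "(\<Sum>x\<in>?X. ((r x)^2 - (r' x)^2) * (Nc n \<omega> x - real n * pmf \<nu> x)) =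
                  (\<Sum>x\<in>?X. (r x)^2 * Nc n \<omega> x - (r' x)^2 * Nc n \<omega> x - (real n * (pmf \<nu> x * (r x)^2) - real n * (pmf \<nu> x * (r' x)^2)))"
                by (rule sum.cong) (simp_all add: algebra_simps)
              also have "\<dots> = (\<Sum>x\<in>?X. (r x)^2 * Nc n \<omega> x) - (\<Sum>x\<in>?X. (r' x)^2 * Nc n \<omega> x)
                  - (real n * (\<Sum>x\<in>?X. pmf \<nu> x * (r x)^2) - real n * (\<Sum>x\<in>?X. pmf \<nu> x * (r' x)^2))"
                by (simp only: sum_subtractf sum_distrib_left)
              finally have e1': "(\<Sum>x\<in>?X. ((r x)^2 - (r' x)^2) * (Nc n \<omega> x - real n * pmf \<nu> x)) =
                  (\<Sum>x\<in>?X. (r x)^2 * Nc n \<omega> x) - (\<Sum>x\<in>?X. (r' x)^2 * Nc n \<omega> x)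
                  - (real n * (\<Sum>x\<in>?X. pmf \<nu> x * (r x)^2) - real n * (\<Sum>x\<in>?X. pmf \<nu> x * (r' x)^2))" .
              have e2: "(\<Sum>x\<in>?X. (r x - r' x) * Ex n \<omega> x) = (\<Sum>x\<in>?X. r x * Ex n \<omega> x) - (\<Sum>x\<in>?X. r' x * Ex n \<omega> x)"
                by (simp only: left_diff_distrib sum_subtractf)
              show ?thesis unfolding D_def Q(5) Q(6) biasE biasE' e1' e2 by (simp add: right_diff_distrib)
            qed
            have b1: "\<bar>\<Sum>x\<in>?X. ((r x)^2 - (r' x)^2) * (Nc n \<omega> x - real n * pmf \<nu> x)\<bar> \<le> T1 * (C * sn)"
              unfolding T1_def sn_def by (rule sum_bound[OF fX]) (use bnd in auto)
            have b2: "\<bar>\<Sum>x\<in>?X. (r x - r' x) * Ex n \<omega> x\<bar> \<le> T2 * (C * sn)"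
              unfolding T2_def sn_def by (rule sum_bound[OF fX]) (use bnd in auto)
            have KK: "K C + K' C \<le> (K C + K' C) * sn" using sn1 K0[of C] by (simp add: mult_le_cancel_left1)
            have Db: "\<bar>D\<bar> \<le> W * sn"
            proof -
              have "\<bar>D\<bar> \<le> T1 * (C * sn) + 2 * (T2 * (C * sn)) + (K C + K' C)"
                unfolding Deq using b1 b2 Q(1-4) by linarith
              also have "\<dots> \<le> T1 * (C * sn) + 2 * (T2 * (C * sn)) + (K C + K' C) * sn" using KK by linarith
              also have "\<dots> = W * sn" unfolding W_def by (simp add: algebra_simps)
              finally show ?thesis .
            qed
            have Phi: "(BIC \<sigma>2 B d E n (covs \<omega>) (resp fstar \<omega>) - BIC \<sigma>2 B d E' n (covs \<omega>) (resp fstar \<omega>))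
                  - real n / \<sigma>2 * (bias2 \<nu> B d E fstar - bias2 \<nu> B d E' fstar) =
                D / \<sigma>2 + (real (df B d E) - real (df B d E')) * ln (real n)"
              unfolding BICd D_def by (simp add: diff_divide_distrib)
            have lnb: "0 \<le> ln (real n)" "ln (real n) \<le> 2 * sn" using n1 ln_le_sqrt[OF n1] unfolding sn_def by auto
            have "\<bar>D / \<sigma>2 + (real (df B d E) - real (df B d E')) * ln (real n)\<bar> \<le> \<bar>D\<bar> / \<sigma>2 + Dd * ln (real n)"
              unfolding Dd_def using abs_triangle_ineq[of "D / \<sigma>2" "(real (df B d E) - real (df B d E')) * ln (real n)"] assms(9) lnb
              by (simp add: abs_mult abs_divide)
            also have "\<dots> \<le> W * sn / \<sigma>2 + Dd * (2 * sn)"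
              using Db lnb assms(9) unfolding Dd_def by (intro add_mono divide_right_mono mult_left_mono) auto
            also have "\<dots> = (W / \<sigma>2 + 2 * Dd) * sn" by (simp add: algebra_simps)
            finally have "\<bar>D / \<sigma>2 + (real (df B d E) - real (df B d E')) * ln (real n)\<bar> / sn \<le> W / \<sigma>2 + 2 * Dd"
              using sn1 by (simp add: divide_le_eq)
            then have "\<bar>(D / \<sigma>2 + (real (df B d E) - real (df B d E')) * ln (real n)) / sqrt (real n)\<bar> < Cst"
              unfolding Cst_def sn_def by (simp add: abs_divide)
            moreover have "Cst < \<bar>((BIC \<sigma>2 B d E n (covs \<omega>) (resp fstar \<omega>) - BIC \<sigma>2 B d E' n (covs \<omega>) (resp fstar \<omega>))
                  - real n / \<sigma>2 * (bias2 \<nu> B d E fstar - bias2 \<nu> B d E' fstar)) / sqrt (real n)\<bar>"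
              using \<omega> by blast
            ultimately show False unfolding Phi by linarith
          qed
        qed
      qed
    qed
  next
    assume H: "\<forall>x\<in>?X. proj \<nu> B d E fstar x = proj \<nu> B d E' fstar x"
    have rr: "\<forall>x\<in>?X. r x = r' x" using H unfolding r_def r'_def by simp
    show "bigO_P ?P
           (\<lambda>n \<omega>. (BIC \<sigma>2 B d E n (covs \<omega>) (resp fstar \<omega>) - BIC \<sigma>2 B d E' n (covs \<omega>) (resp fstar \<omega>))
                  - (real (df B d E) - real (df B d E')) * ln (real n))
           (\<lambda>n. 1)"
      unfolding bigO_P_def
    proof (intro allI impI)
      fix \<delta> :: real assume \<delta>: "0 < \<delta> \<and> \<delta> < 1"
      obtain C Nr where Cpos: "C > 0" and Nrpos: "Nr > 0" and M: "\<forall>n. real n > Nr \<longrightarrow> (\<exists>S\<in>sets (?P n). measure (?P n) S < \<delta> \<and>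
      (\<forall>\<omega>\<in>space (?P n) - S. 1 \<le> real n \<and>
        (\<forall>x\<in>?X. \<bar>Nc n \<omega> x - real n * pmf \<nu> x\<bar> \<le> C * sqrt (real n) \<and> \<bar>Ex n \<omega> x\<bar> \<le> C * sqrt (real n)) \<and>
        (\<exists>Q Q'. 0 \<le> Q \<and> Q \<le> K C \<and> 0 \<le> Q' \<and> Q' \<le> K' C \<and>
          RSS E n \<omega> = (\<Sum>x\<in>?X. (r x)^2 * Nc n \<omega> x) + 2 * (\<Sum>x\<in>?X. r x * Ex n \<omega> x) + SE n \<omega> - Q \<and>
          RSS E' n \<omega> = (\<Sum>x\<in>?X. (r' x)^2 * Nc n \<omega> x) + 2 * (\<Sum>x\<in>?X. r' x * Ex n \<omega> x) + SE n \<omega> - Q')))"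
        using master[of \<delta>] \<delta> by blast
      define Cst where "Cst = (K C + K' C) / \<sigma>2 + 1"
      have Cstpos: "Cst > 0" unfolding Cst_def using K0[of C] assms(9) by (simp add: add_nonneg_pos)
      show "\<exists>N C. N > 0 \<and> C > 0 \<and> (\<forall>n. real n > N \<longrightarrow>
            (\<exists>S\<in>sets (?P n). {\<omega>\<in>space (?P n). \<bar>((BIC \<sigma>2 B d E n (covs \<omega>) (resp fstar \<omega>) - BIC \<sigma>2 B d E' n (covs \<omega>) (resp fstar \<omega>))
                  - (real (df B d E) - real (df B d E')) * ln (real n)) / 1\<bar> > C} \<subseteq> S \<and> measure (?P n) S < \<delta>))"
      proof (rule exI[of _ Nr], rule exI[of _ Cst], intro conjI allI impI Nrpos Cstpos)
        fix n assume nN: "real n > Nr"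
        obtain S where S1: "S \<in> sets (?P n)" and S2: "measure (?P n) S < \<delta>" and good: "\<forall>\<omega>\<in>space (?P n) - S. 1 \<le> real n \<and>
          (\<forall>x\<in>?X. \<bar>Nc n \<omega> x - real n * pmf \<nu> x\<bar> \<le> C * sqrt (real n) \<and> \<bar>Ex n \<omega> x\<bar> \<le> C * sqrt (real n)) \<and>
          (\<exists>Q Q'. 0 \<le> Q \<and> Q \<le> K C \<and> 0 \<le> Q' \<and> Q' \<le> K' C \<and>
            RSS E n \<omega> = (\<Sum>x\<in>?X. (r x)^2 * Nc n \<omega> x) + 2 * (\<Sum>x\<in>?X. r x * Ex n \<omega> x) + SE n \<omega> - Q \<and>
            RSS E' n \<omega> = (\<Sum>x\<in>?X. (r' x)^2 * Nc n \<omega> x) + 2 * (\<Sum>x\<in>?X. r' x * Ex n \<omega> x) + SE n \<omega> - Q')"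
          using M nN by blast
        show "\<exists>S\<in>sets (?P n). {\<omega>\<in>space (?P n). \<bar>((BIC \<sigma>2 B d E n (covs \<omega>) (resp fstar \<omega>) - BIC \<sigma>2 B d E' n (covs \<omega>) (resp fstar \<omega>))
                  - (real (df B d E) - real (df B d E')) * ln (real n)) / 1\<bar> > Cst} \<subseteq> S \<and> measure (?P n) S < \<delta>"
        proof (rule bexI[OF _ S1], rule conjI[OF _ S2], rule subsetI)
          fix \<omega> assume \<omega>: "\<omega> \<in> {\<omega>\<in>space (?P n). \<bar>((BIC \<sigma>2 B d E n (covs \<omega>) (resp fstar \<omega>) - BIC \<sigma>2 B d E' n (covs \<omega>) (resp fstar \<omega>))
                  - (real (df B d E) - real (df B d E')) * ln (real n)) / 1\<bar> > Cst}"
          show "\<omega> \<in> S"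
          proof (rule ccontr)
            assume "\<omega> \<notin> S"
            then have \<omega>g: "\<omega> \<in> space (?P n) - S" using \<omega> by auto
            obtain Q Q' where Q: "0 \<le> Q" "Q \<le> K C" "0 \<le> Q'" "Q' \<le> K' C"
              "RSS E n \<omega> = (\<Sum>x\<in>?X. (r x)^2 * Nc n \<omega> x) + 2 * (\<Sum>x\<in>?X. r x * Ex n \<omega> x) + SE n \<omega> - Q"
              "RSS E' n \<omega> = (\<Sum>x\<in>?X. (r' x)^2 * Nc n \<omega> x) + 2 * (\<Sum>x\<in>?X. r' x * Ex n \<omega> x) + SE n \<omega> - Q'"
              using good \<omega>g by blast
            have s1: "(\<Sum>x\<in>?X. (r x)^2 * Nc n \<omega> x) = (\<Sum>x\<in>?X. (r' x)^2 * Nc n \<omega> x)"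
              using rr by (intro sum.cong) auto
            have s2: "(\<Sum>x\<in>?X. r x * Ex n \<omega> x) = (\<Sum>x\<in>?X. r' x * Ex n \<omega> x)"
              using rr by (intro sum.cong) auto
            have Phi: "(BIC \<sigma>2 B d E n (covs \<omega>) (resp fstar \<omega>) - BIC \<sigma>2 B d E' n (covs \<omega>) (resp fstar \<omega>))
                  - (real (df B d E) - real (df B d E')) * ln (real n) = (Q' - Q) / \<sigma>2"
              unfolding BICd Q(5) Q(6) s1 s2 by simp
            have "\<bar>(Q' - Q) / \<sigma>2\<bar> \<le> (K C + K' C) / \<sigma>2"
            proof -
              have "\<bar>Q' - Q\<bar> \<le> K C + K' C" using Q(1-4) by (simp add: abs_le_iff)
              then have "\<bar>Q' - Q\<bar> / \<sigma>2 \<le> (K C + K' C) / \<sigma>2" using assms(9) by (rule divide_right_mono[OF _ less_imp_le])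
              then show ?thesis using assms(9) by (simp add: abs_divide)
            qed
            moreover have "Cst < \<bar>((BIC \<sigma>2 B d E n (covs \<omega>) (resp fstar \<omega>) - BIC \<sigma>2 B d E' n (covs \<omega>) (resp fstar \<omega>))
                  - (real (df B d E) - real (df B d E')) * ln (real n)) / 1\<bar>"
              using \<omega> by blast
            ultimately show False unfolding Phi Cst_def by simp
          qed
        qed
      qed
    qed
  qed
qed


end
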